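(* Let $b:\Omega\times\mathbb R\to\mathbb R$ be a Carathéodory function, $C^1$ in $\eta$ for a.e. $x$ and measurable in $x$ for each $\eta$, with a constant $B_\eta\ge0$ such that $0\le\frac{\partial b}{\partial\eta}(x,\eta)\le B_\eta$ for a.e. $x\in\Omega$ and all $\eta\in\mathbb R$. Consider either (1D) $\Omega=(\alpha,\beta)$ with subdivision $\alpha=a_0<a_1<\dots<a_n=\beta$, $h_k=a_k-a_{k-1}$, and $\mathcal V$ the continuous piecewise linear functions on this subdivision vanishing at $\alpha$ and $\beta$; or (2D) $\Omega\subset\mathbb R^2$ polygonal with a conforming triangulation $\mathcal T$ such that there are $0<t_{min}\le t_{max}<\pi/2$ with every interior angle of every triangle in $[t_{min},t_{max}]$, and $\mathcal V$ the continuous piecewise linear functions on $\mathcal T$ vanishing on $\partial\Omega$. Let $\mathcal V^+=\{v\in\mathcal V:v\ge0\}$, let $u_1\in\mathcal V$ satisfy $\int_\Omega\nabla u_1\cdot\nabla v+b(x,u_1)v\,dx\le0$ for all $v\in\mathcal V^+$ and $u_2\in\mathcal V$ satisfy $\int_\Omega\nabla u_2\cdot\nabla v+b(x,u_2)v\,dx\ge0$ for all $v\in\mathcal V^+$. Suppose that, in the 1D case, $h_k^2<\frac{2}{B_\eta}$ for $k=1,\dots,n$, and in the 2D case, $|T|<\frac{3}{7B_\eta}\min_{k=1,2,3}\cot\theta_{T,k}$ for each $T\in\mathcal T$, where $|T|$ is the area of $T$ and $\theta_{T,1},\theta_{T,2},\theta_{T,3}$ are its interior angles. Then $u_1\le u_2$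 in $\Omega$.
   Context: This concerns the $P_1$ finite element discretization of the semilinear problem $-\Delta u+b(x,u)=0$ in $\Omega$, $u=0$ on $\partial\Omega$, whose discrete form is: find $u\in\mathcal V$ with $\int_\Omega\nabla u\cdot\nabla v+b(x,u)v\,dx=0$ for all $v\in\mathcal V$; $u_1$ and $u_2$ are respectively a discrete sub- and supersolution of it. *)

theory Defs
  imports "HOL-Analysis.Analysis"
begin

definition vangle :: "'a::real_inner \<Rightarrow> 'a \<Rightarrow> real" where
  "vangle u v = arccos ((u \<bullet> v) / (norm u * norm v))"

definition grad :: "(real^2 \<Rightarrow> real) \<Rightarrow> real^2 \<Rightarrow> real^2" where
  "grad f x = (\<chi> i. frechet_derivative f (at x) (axis i 1))"

definition caratheodory_bounded ::
  "'a::euclidean_space set \<Rightarrow> ('a \<Rightarrow> real \<Rightarrow> real) \<Rightarrow> real \<Rightarrow> bool" where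
  "caratheodory_bounded \<Omega> b B \<longleftrightarrow> B \<ge> 0 \<and>
     (\<forall>\<eta>. (\<lambda>x. b x \<eta>) \<in> borel_measurable (lebesgue_on \<Omega>)) \<and>
     (AE x in lebesgue. x \<in> \<Omega> \<longrightarrow>
        (b x) C1_differentiable_on UNIV \<and>
        (\<forall>\<eta>. 0 \<le> deriv (b x) \<eta> \<and> deriv (b x) \<eta> \<le> B))"

definition discrete_subsol ::
  "'a::euclidean_space set \<Rightarrow> ('a \<Rightarrow> real) set \<Rightarrow> (('a \<Rightarrow> real) \<Rightarrow> ('a \<Rightarrow> real) \<Rightarrow> 'a \<Rightarrow> real)
    \<Rightarrow> ('a \<Rightarrow> real \<Rightarrow> real) \<Rightarrow> ('a \<Rightarrow> real) \<Rightarrow> bool" where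
  "discrete_subsol \<Omega> V gp b u \<longleftrightarrow> u \<in> V \<and>
     (\<forall>v\<in>V. (\<forall>x\<in>\<Omega>. v x \<ge> 0) \<longrightarrow>
        set_integrable lebesgue \<Omega> (\<lambda>x. gp u v x + b x (u x) * v x) \<and>
        (LINT x:\<Omega>|lebesgue. gp u v x + b x (u x) * v x) \<le> 0)"

definition discrete_supersol ::
  "'a::euclidean_space set \<Rightarrow> ('a \<Rightarrow> real) set \<Rightarrow> (('a \<Rightarrow> real) \<Rightarrow> ('a \<Rightarrow> real) \<Rightarrow> 'a \<Rightarrow> real)
    \<Rightarrow> ('a \<Rightarrow> real \<Rightarrow> real) \<Rightarrow> ('a \<Rightarrow> real) \<Rightarrow> bool" where
  "discrete_supersol \<Omega> V gp b u \<longleftrightarrow> u \<in> V \<and>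
     (\<forall>v\<in>V. (\<forall>x\<in>\<Omega>. v x \<ge> 0) \<longrightarrow>
        set_integrable lebesgue \<Omega> (\<lambda>x. gp u v x + b x (u x) * v x) \<and>
        (LINT x:\<Omega>|lebesgue. gp u v x + b x (u x) * v x) \<ge> 0)"

definition mesh1D :: "real \<Rightarrow> real \<Rightarrow> nat \<Rightarrow> (nat \<Rightarrow> real) \<Rightarrow> bool" where
  "mesh1D \<alpha> \<beta> n a \<longleftrightarrow> n \<ge> 1 \<and> a 0 = \<alpha> \<and> a n = \<beta> \<and> (\<forall>k\<in>{1..n}. a (k - 1) < a k)"

(* continuous piecewise linear functions on the subdivision vanishing at the endpoints
   (continuity on [alpha,beta] follows from affinity on each closed subinterval) *)
definition P1_1D :: "nat \<Rightarrow> (nat \<Rightarrow> real) \<Rightarrow> (real \<Rightarrow> real) set" where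
  "P1_1D n a = {v. v (a 0) = 0 \<and> v (a n) = 0 \<and>
     (\<forall>k\<in>{1..n}. \<exists>c d. \<forall>x\<in>{a (k - 1)..a k}. v x = c * x + d)}"

(* conforming triangulation of a polygonal domain Omega: triangles are given by their
   vertex sets; two distinct triangles meet in the convex hull of their common vertices
   (empty, a common vertex, or a common edge) *)
definition conforming_triangulation :: "(real^2) set \<Rightarrow> (real^2) set set \<Rightarrow> bool" where
  "conforming_triangulation \<Omega> \<T> \<longleftrightarrow> finite \<T> \<and> \<T> \<noteq> {} \<and>
     (\<forall>T\<in>\<T>. card T = 3 \<and> \<not> collinear T) \<and>
     \<Omega> = interior (\<Union>T\<in>\<T>. convex hull T) \<and>
     (\<forall>T1\<in>\<T>. \<forall>T2\<in>\<T>. T1 \<noteq> T2 \<longrightarrow>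
        convex hull T1 \<inter> convex hull T2 = convex hull (T1 \<inter> T2))"

definition tri_angles :: "(real^2) set \<Rightarrow> real set" where
  "tri_angles T = {vangle (q - p) (r - p) | p q r.
      p \<in> T \<and> q \<in> T \<and> r \<in> T \<and> p \<noteq> q \<and> p \<noteq> r \<and> q \<noteq> r}"

definition P1_2D :: "(real^2) set \<Rightarrow> (real^2) set set \<Rightarrow> (real^2 \<Rightarrow> real) set" where
  "P1_2D \<Omega> \<T> = {v. (\<forall>x\<in>frontier \<Omega>. v x = 0) \<and>
     (\<forall>T\<in>\<T>. \<exists>c d. \<forall>x\<in>convex hull T. v x = c \<bullet> x + d)}"

end

theory Submission
  imports Defs
begin


lemma b_diff:
  fixes f :: "real \<Rightarrow> real"
  assumes C1: "f C1_differentiable_on UNIV" and d: "\<forall>\<eta>. 0 \<le> deriv f \<eta> \<and> deriv f \<eta> \<le> B"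
  shows "f s - f t \<ge> B * min (s - t) 0"
proof -
  have D: "\<And>x. DERIV f x :> deriv f x"
    using C1 by (simp add: C1_differentiable_on_eq DERIV_deriv_iff_real_differentiable)
  consider "s = t" | "t < s" | "s < t" by linarith
  then show ?thesis
  proof cases
    case 2
    then obtain z where "f s - f t = (s - t) * deriv f z" using MVT2[of t s f "deriv f"] D by blast
    then show ?thesis using 2 d by (simp add: min_def)
  next
    case 3
    then obtain z where z: "f t - f s = (t - s) * deriv f z" using MVT2[of s t f "deriv f"] D by blast
    have "(t - s) * deriv f z \<le> (t - s) * B" using 3 d by (intro mult_left_mono) auto
    then show ?thesis using 3 z by (simp add: min_def algebra_simps)
  qed simp
qed

lemma b_diff_mult:
  fixes f :: "real \<Rightarrow> real"
  assumes C1: "f C1_differentiable_on UNIV" and d: "\<forall>\<eta>. 0 \<le> deriv f \<eta> \<and> deriv f \<eta> \<le> B"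
    and "v \<ge> 0"
  shows "(f s - f t) * v \<ge> B * min (s - t) 0 * v"
  using b_diff[OF C1 d, where s=s and t=t] assms(3) by (simp add: mult_right_mono)

lemma deriv_affine_open:
  fixes f :: "real \<Rightarrow> real"
  assumes "\<forall>y\<in>{l<..<r}. f y = c * y + d" "x \<in> {l<..<r}"
  shows "deriv f x = c"
proof -
  have "((\<lambda>y. c * y + d) has_field_derivative c) (at x)"
    by (auto intro!: derivative_eq_intros)
  then have "(f has_field_derivative c) (at x)"
    by (rule has_field_derivative_transform_within_open[of _ _ _ "{l<..<r}"]) (use assms in auto)
  then show ?thesis by (rule DERIV_imp_deriv)
qed

lemma mesh_mono:
  assumes "mesh1D \<alpha> \<beta> n a" "i < j" "j \<le> n"
  shows "a i < a j"
  using assms(2,3)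
proof (induction j)
  case 0 then show ?case by simp
next
  case (Suc j)
  have "Suc j \<in> {1..n}" using Suc.prems by auto
  then have "a (Suc j - 1) < a (Suc j)" using assms(1) unfolding mesh1D_def by blast
  then have "a j < a (Suc j)" by simp
  then show ?case using Suc by (cases "i = j") auto
qed

lemma mesh_mono_le:
  assumes "mesh1D \<alpha> \<beta> n a" "i \<le> j" "j \<le> n"
  shows "a i \<le> a j"
  using mesh_mono[OF assms(1), of i j] assms by (cases "i = j") auto

lemma mesh_elem:
  assumes "mesh1D \<alpha> \<beta> n a" "x \<in> {\<alpha><..<\<beta>}"
  shows "\<exists>k\<in>{1..n}. a (k - 1) < x \<and> x \<le> a k"
proof -
  define k where "k = (LEAST k. x \<le> a k)"
  have ex: "x \<le> a n" using assms unfolding mesh1D_def by auto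
  then have xk: "x \<le> a k" unfolding k_def by (rule LeastI)
  have kn: "k \<le> n" unfolding k_def using ex by (rule Least_le)
  have k0: "k \<noteq> 0"
  proof
    assume "k = 0"
    then show False using xk assms unfolding mesh1D_def by auto
  qed
  have "\<not> x \<le> a (k - 1)" unfolding k_def
    by (rule not_less_Least) (use k0 in \<open>simp add: k_def\<close>)
  then show ?thesis using xk kn k0 by (intro bexI[of _ k]) auto
qed

lemma affine_between:
  fixes c d l r x :: real
  assumes "l \<le> x" "x \<le> r" "c*l + d \<le> 0" "c*r + d \<le> 0"
  shows "c*x + d \<le> 0"
proof (cases "c \<ge> 0")
  case True
  then have "c * x \<le> c * r" using assms by (intro mult_left_mono) auto
  then show ?thesis using assms by linarith
next
  case False
  then have "c * x \<le> c * l" using assms by (intro mult_left_mono_neg) auto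
  then show ?thesis using assms by linarith
qed

lemma ind_int: "integrable lebesgue (indicat_real {l<..<r::real})"
proof -
  have "{l<..<r} \<in> lmeasurable" by simp
  then show ?thesis unfolding fmeasurable_def by (simp add: integrable_indicator_iff)
qed

lemma tprod_le: "(t::real) * (1 - t) \<le> 1/4"
proof -
  have "0 \<le> (t - 1/2)^2" by simp
  then show ?thesis by (simp add: power2_eq_square algebra_simps)
qed


lemma thm1D:
  fixes b :: "real \<Rightarrow> real \<Rightarrow> real"
  assumes mesh: "mesh1D \<alpha> \<beta> n a"
    and car: "caratheodory_bounded {\<alpha><..<\<beta>} b B"
    and sub: "discrete_subsol {\<alpha><..<\<beta>} (P1_1D n a) (\<lambda>u v x. deriv u x * deriv v x) b u1"
    and sup: "discrete_supersol {\<alpha><..<\<beta>} (P1_1D n a) (\<lambda>u v x. deriv u x * deriv v x) b u2"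
    and hk: "\<forall>k\<in>{1..n}. B * (a k - a (k - 1))^2 < 2"
  shows "\<forall>x\<in>{\<alpha><..<\<beta>}. u1 x \<le> u2 x"
proof (rule ccontr)
  define \<Omega> where "\<Omega> = {\<alpha><..<\<beta>}"
  assume "\<not> (\<forall>x\<in>{\<alpha><..<\<beta>}. u1 x \<le> u2 x)"
  then obtain x0 where x0: "x0 \<in> \<Omega>" "u1 x0 > u2 x0" unfolding \<Omega>_def by auto
  have B0: "B \<ge> 0" using car unfolding caratheodory_bounded_def by auto
  have n1: "n \<ge> 1" and a0: "a 0 = \<alpha>" and an: "a n = \<beta>" using mesh unfolding mesh1D_def by auto
  have mono: "\<And>i j. i < j \<Longrightarrow> j \<le> n \<Longrightarrow> a i < a j" using mesh_mono[OF mesh] by blast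
  have monole: "\<And>i j. i \<le> j \<Longrightarrow> j \<le> n \<Longrightarrow> a i \<le> a j" using mesh_mono_le[OF mesh] by blast
  have u1V: "u1 \<in> P1_1D n a" using sub unfolding discrete_subsol_def by auto
  have u2V: "u2 \<in> P1_1D n a" using sup unfolding discrete_supersol_def by auto
  obtain C1 D1 where CD1: "\<forall>k\<in>{1..n}. \<forall>x\<in>{a (k - 1)..a k}. u1 x = C1 k * x + D1 k"
  proof -
    have "\<forall>k\<in>{1..n}. \<exists>c d. \<forall>x\<in>{a (k - 1)..a k}. u1 x = c * x + d" using u1V unfolding P1_1D_def by simp
    then show ?thesis using that by metis
  qed
  obtain C2 D2 where CD2: "\<forall>k\<in>{1..n}. \<forall>x\<in>{a (k - 1)..a k}. u2 x = C2 k * x + D2 k"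
  proof -
    have "\<forall>k\<in>{1..n}. \<exists>c d. \<forall>x\<in>{a (k - 1)..a k}. u2 x = c * x + d" using u2V unfolding P1_1D_def by simp
    then show ?thesis using that by metis
  qed
  define w where "w x = u1 x - u2 x" for x
  define Cw where "Cw k = C1 k - C2 k" for k
  define Dw where "Dw k = D1 k - D2 k" for k
  have CDw: "\<And>k x. k \<in> {1..n} \<Longrightarrow> x \<in> {a (k - 1)..a k} \<Longrightarrow> w x = Cw k * x + Dw k"
    using CD1 CD2 unfolding w_def Cw_def Dw_def by (auto simp: algebra_simps)
  define W where "W k = w (a k)" for k
  have W0: "W 0 = 0" and Wn: "W n = 0"
    using u1V u2V unfolding W_def w_def P1_1D_def by auto
  obtain k0 where k0: "k0 \<in> {1..n}" "a (k0 - 1) < x0" "x0 \<le> a k0"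
    using mesh_elem[OF mesh] x0(1) unfolding \<Omega>_def by blast
  have "W (k0 - 1) > 0 \<or> W k0 > 0"
  proof (rule ccontr)
    assume neg: "\<not> ?thesis"
    then have "Cw k0 * a (k0 - 1) + Dw k0 \<le> 0" "Cw k0 * a k0 + Dw k0 \<le> 0"
    proof -
      have "a (k0 - 1) \<in> {a (k0 - 1)..a k0}" "a k0 \<in> {a (k0 - 1)..a k0}" using k0 by auto
      then show "Cw k0 * a (k0 - 1) + Dw k0 \<le> 0" "Cw k0 * a k0 + Dw k0 \<le> 0"
        using CDw[OF k0(1), of "a (k0 - 1)"] CDw[OF k0(1), of "a k0"] neg
        unfolding W_def by auto
    qed
    then have "Cw k0 * x0 + Dw k0 \<le> 0" using affine_between[of "a (k0 - 1)" x0 "a k0"] k0 by auto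
    then show False using CDw[OF k0(1), of x0] k0 x0(2) unfolding w_def by auto
  qed
  then obtain kp where kp: "kp \<in> {0..n}" "W kp > 0" using k0(1) by (auto intro: that[of "k0 - 1"] that[of k0])
  define M where "M = Max (W ` {0..n})"
  have Mge: "\<And>k. k \<in> {0..n} \<Longrightarrow> W k \<le> M" unfolding M_def by auto
  have Mpos: "M > 0" using Mge[OF kp(1)] kp(2) by linarith
  have "M \<in> W ` {0..n}" unfolding M_def by (intro Max_in) auto
  define P where "P = {k\<in>{0..n}. W k = M}"
  have Pne: "P \<noteq> {}" "finite P" using \<open>M \<in> W ` {0..n}\<close> unfolding P_def by auto
  define p where "p = Max P"
  have pP: "p \<in> P" unfolding p_def using Pne by (rule Max_in[rotated])
  have pmax: "\<And>k. k \<in> P \<Longrightarrow> k \<le> p" unfolding p_def using Pne by auto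
  have Wp: "W p = M" and pn: "p \<le> n" using pP unfolding P_def by auto
  have p0: "p \<noteq> 0"
  proof
    assume "p = 0" then show False using Wp W0 Mpos by simp
  qed
  have pn': "p \<noteq> n" using Wp Wn Mpos by auto
  have p1: "1 \<le> p" "p + 1 \<le> n" using p0 pn pn' by auto
  have Wp1: "W (p + 1) < M"
  proof -
    have "W (p + 1) \<le> M" using Mge p1 by auto
    moreover have "W (p + 1) \<noteq> M" using pmax[of "p + 1"] p1 unfolding P_def by auto
    ultimately show ?thesis by auto
  qed
  have Wpm1: "W (p - 1) \<le> M" using Mge p1 by auto
  define h1 where "h1 = a p - a (p - 1)"
  define h2 where "h2 = a (p + 1) - a p"
  have h1pos: "h1 > 0" unfolding h1_def using mono[of "p - 1" p] p1 by auto
  have h2pos: "h2 > 0" unfolding h2_def using mono[of p "p + 1"] p1 by auto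
  define E1 where "E1 = M - W (p - 1)"
  define E2 where "E2 = M - W (p + 1)"
  have E1: "E1 \<ge> 0" and E2: "E2 > 0" using Wpm1 Wp1 unfolding E1_def E2_def by auto
  define \<phi> where "\<phi> x = (if a (p - 1) \<le> x \<and> x \<le> a p then (x - a (p - 1)) / h1
      else if a p \<le> x \<and> x \<le> a (p + 1) then (a (p + 1) - x) / h2 else 0)" for x
  have phi_elem: "\<phi> y = (if k = p then (y - a (p - 1)) / h1 else if k = p + 1 then (a (p + 1) - y) / h2 else 0)"
    if k: "k \<in> {1..n}" "y \<in> {a (k - 1)..a k}" for k y
  proof -
    consider "k = p" | "k = p + 1" | "k < p" | "k > p + 1" by linarith
    then show ?thesis
    proof cases
      case 1 then show ?thesis using k unfolding \<phi>_def by auto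
    next
      case 2
      then show ?thesis using k h1pos h2pos unfolding \<phi>_def h1_def h2_def by auto
    next
      case 3
      then have "a k \<le> a (p - 1)" using monole[of k "p - 1"] p1 by auto
      moreover have "a (p - 1) < a p" using mono[of "p - 1" p] p1 by auto
      ultimately show ?thesis using k 3 unfolding \<phi>_def by auto
    next
      case 4
      then have "a (p + 1) \<le> a (k - 1)" using monole[of "p + 1" "k - 1"] k by auto
      moreover have "a p < a (p + 1)" using mono[of p "p + 1"] p1 by auto
      ultimately show ?thesis using k 4 unfolding \<phi>_def by auto
    qed
  qed
  have phi_nonneg: "\<phi> x \<ge> 0" for x
    unfolding \<phi>_def using h1pos h2pos by auto
  have phiV: "\<phi> \<in> P1_1D n a"
  proof -
    have "\<phi> (a 0) = 0"
      using phi_elem[of 1 "a 0"] n1 p1 mono[of 0 1] by (auto simp: h1_def)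
    moreover have "\<phi> (a n) = 0"
      using phi_elem[of n "a n"] n1 p1 mono[of "n - 1" n] by (auto simp: h2_def)
    moreover have "\<exists>c d. \<forall>x\<in>{a (k - 1)..a k}. \<phi> x = c * x + d" if k: "k \<in> {1..n}" for k
    proof -
      consider "k = p" | "k = p + 1" | "k \<noteq> p \<and> k \<noteq> p + 1" by blast
      then show ?thesis
      proof cases
        case 1
        show ?thesis
          by (rule exI[of _ "1 / h1"], rule exI[of _ "- a (p - 1) / h1"])
             (use phi_elem[OF k] 1 in \<open>auto simp: diff_divide_distrib\<close>)
      next
        case 2
        show ?thesis
          by (rule exI[of _ "- 1 / h2"], rule exI[of _ "a (p + 1) / h2"])
             (use phi_elem[OF k] 2 in \<open>auto simp: diff_divide_distrib\<close>)
      next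
        case 3
        show ?thesis
          by (rule exI[of _ 0], rule exI[of _ 0]) (use phi_elem[OF k] 3 in auto)
      qed
    qed
    ultimately show ?thesis unfolding P1_1D_def by auto
  qed
  have phipos: "\<forall>x\<in>{\<alpha><..<\<beta>}. \<phi> x \<ge> 0" using phi_nonneg by auto
  define f1 where "f1 x = deriv u1 x * deriv \<phi> x + b x (u1 x) * \<phi> x" for x
  define f2 where "f2 x = deriv u2 x * deriv \<phi> x + b x (u2 x) * \<phi> x" for x
  have i1: "set_integrable lebesgue \<Omega> f1" and l1: "(LINT x:\<Omega>|lebesgue. f1 x) \<le> 0"
    using sub phiV phipos unfolding discrete_subsol_def f1_def \<Omega>_def by auto
  have i2: "set_integrable lebesgue \<Omega> f2" and l2: "(LINT x:\<Omega>|lebesgue. f2 x) \<ge> 0"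
    using sup phiV phipos unfolding discrete_supersol_def f2_def \<Omega>_def by auto
  define K1 where "K1 = E1 * (1 / h1^2 - B / 4)"
  define K2 where "K2 = E2 * (1 / h2^2 - B / 4)"
  have q1: "1 / h1^2 - B / 4 > 0"
  proof -
    have "B * h1^2 < 2" using hk p1 unfolding h1_def by auto
    then have "B / 4 * h1^2 < 1" by simp
    then show ?thesis using h1pos by (simp add: field_simps)
  qed
  have q2: "1 / h2^2 - B / 4 > 0"
  proof -
    have "B * h2^2 < 2" using hk[rule_format, of "p + 1"] p1 unfolding h2_def by auto
    then have "B / 4 * h2^2 < 1" by simp
    then show ?thesis using h2pos by (simp add: field_simps)
  qed
  have K1: "K1 \<ge> 0" and K2: "K2 > 0" unfolding K1_def K2_def using q1 q2 E1 E2 by auto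
  define I1 where "I1 = {a (p - 1)<..<a p}"
  define I2 where "I2 = {a p<..<a (p + 1)}"
  define g where "g x = indicator I1 x * K1 + indicator I2 x * K2" for x
  have I1sub: "I1 \<subseteq> \<Omega>" and I2sub: "I2 \<subseteq> \<Omega>"
  proof -
    have "a 0 \<le> a (p - 1)" "a (p + 1) \<le> a n" "a (p - 1) < a p" "a p < a (p + 1)"
      using monole[of 0 "p - 1"] monole[of "p + 1" n] mono[of "p - 1" p] mono[of p "p + 1"] p1 by auto
    then show "I1 \<subseteq> \<Omega>" "I2 \<subseteq> \<Omega>" using a0 an unfolding I1_def I2_def \<Omega>_def by auto
  qed
  have pw: "g x \<le> f1 x - f2 x"
    if x: "x \<in> \<Omega>" "x \<notin> a ` {0..n}" and bC1: "(b x) C1_differentiable_on UNIV"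
      and bd: "\<forall>\<eta>. 0 \<le> deriv (b x) \<eta> \<and> deriv (b x) \<eta> \<le> B" for x
  proof -
    obtain k where k: "k \<in> {1..n}" "a (k - 1) < x" "x \<le> a k"
      using mesh_elem[OF mesh] x(1) unfolding \<Omega>_def by blast
    have "x \<noteq> a k" using x(2) k(1) by auto
    with k have xk: "x \<in> {a (k - 1)<..<a k}" by auto
    have "deriv u1 x = C1 k"
      by (rule deriv_affine_open[OF _ xk]) (use CD1 k(1) in auto)
    moreover have "deriv u2 x = C2 k"
      by (rule deriv_affine_open[OF _ xk]) (use CD2 k(1) in auto)
    ultimately have fd: "f1 x - f2 x = Cw k * deriv \<phi> x + (b x (u1 x) - b x (u2 x)) * \<phi> x"
      unfolding f1_def f2_def Cw_def by (simp add: algebra_simps)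
    have bb: "(b x (u1 x) - b x (u2 x)) * \<phi> x \<ge> B * min (w x) 0 * \<phi> x"
      using b_diff_mult[OF bC1 bd phi_nonneg[of x], of "u1 x" "u2 x"] unfolding w_def by simp
    have wx: "w x = Cw k * x + Dw k" using CDw[OF k(1)] xk by auto
    have ends: "a (k - 1) \<in> {a (k - 1)..a k}" "a k \<in> {a (k - 1)..a k}" using k by auto
    have Wk: "W k = Cw k * a k + Dw k" "W (k - 1) = Cw k * a (k - 1) + Dw k"
      using CDw[OF k(1) ends(1)] CDw[OF k(1) ends(2)] unfolding W_def by auto
    have phix: "\<phi> x = (if k = p then (x - a (p - 1)) / h1 else if k = p + 1 then (a (p + 1) - x) / h2 else 0)"
      using phi_elem[OF k(1)] xk by auto
    consider "k = p" | "k = p + 1" | "k \<noteq> p \<and> k \<noteq> p + 1" by blast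
    then show ?thesis
    proof cases
      case 1
      have dphi: "deriv \<phi> x = 1 / h1"
        by (rule deriv_affine_open[OF _ xk, where d = "- a (p - 1) / h1"])
           (use phi_elem[OF k(1)] 1 in \<open>auto simp: diff_divide_distrib\<close>)
      define t where "t = (x - a (p - 1)) / h1"
      have t01: "0 \<le> t" "t \<le> 1" using xk 1 h1pos unfolding t_def h1_def by auto
      have phit: "\<phi> x = t" using phix 1 unfolding t_def by simp
      have CwE: "Cw k = E1 / h1" using Wk 1 Wp h1pos unfolding E1_def h1_def
        by (simp add: field_simps algebra_simps)
      have E1h: "E1 = Cw k * h1" using Wk 1 Wp unfolding E1_def h1_def by (simp add: algebra_simps)
      have ht: "h1 * (1 - t) = a p - x" unfolding t_def using h1pos unfolding h1_def by (simp add: field_simps)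
      have Et: "E1 * (1 - t) = Cw k * (a p - x)" unfolding E1h ht[symmetric] by (simp add: mult.assoc)
      have wxt: "w x = M - E1 * (1 - t)"
        using wx Wk 1 Wp unfolding Et by (simp add: algebra_simps)
      have e0: "E1 * (1 - t) \<ge> 0" using E1 t01 by simp
      have mn: "min (w x) 0 \<ge> - (E1 * (1 - t))" using wxt Mpos e0 by simp
      have "B * min (w x) 0 * \<phi> x \<ge> B * (- (E1 * (1 - t))) * t"
        unfolding phit using mn B0 t01 by (intro mult_right_mono mult_left_mono) auto
      moreover have "B * (- (E1 * (1 - t))) * t \<ge> - (B * E1) / 4"
      proof -
        have "(B * E1) * (t * (1 - t)) \<le> (B * E1) * (1/4)"
          using tprod_le[of t] B0 E1 by (intro mult_left_mono) auto
        then show ?thesis by (simp add: algebra_simps)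
      qed
      moreover have "Cw k * deriv \<phi> x = E1 / h1^2" using CwE dphi by (simp add: power2_eq_square)
      moreover have "g x = K1" using xk 1 unfolding g_def I1_def I2_def by auto
      ultimately show ?thesis using fd bb unfolding K1_def by (simp add: algebra_simps)
    next
      case 2
      have dphi: "deriv \<phi> x = - 1 / h2"
        by (rule deriv_affine_open[OF _ xk, where d = "a (p + 1) / h2"])
           (use phi_elem[OF k(1)] 2 in \<open>auto simp: diff_divide_distrib\<close>)
      define t where "t = (a (p + 1) - x) / h2"
      have t01: "0 \<le> t" "t \<le> 1" using xk 2 h2pos unfolding t_def h2_def by auto
      have phit: "\<phi> x = t" using phix 2 p1 unfolding t_def by simp
      have CwE: "Cw k = - E2 / h2" using Wk 2 Wp h2pos unfolding E2_def h2_def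
        by (simp add: field_simps algebra_simps)
      have E2h: "E2 = - Cw k * h2" using Wk 2 Wp unfolding E2_def h2_def by (simp add: algebra_simps)
      have ht: "h2 * (1 - t) = x - a p" unfolding t_def using h2pos unfolding h2_def by (simp add: field_simps)
      have Et: "E2 * (1 - t) = - Cw k * (x - a p)" unfolding E2h ht[symmetric] by (simp add: mult.assoc)
      have wxt: "w x = M - E2 * (1 - t)"
        using wx Wk 2 Wp unfolding Et by (simp add: algebra_simps)
      have e0: "E2 * (1 - t) \<ge> 0" using E2 t01 by simp
      have mn: "min (w x) 0 \<ge> - (E2 * (1 - t))" using wxt Mpos e0 by simp
      have "B * min (w x) 0 * \<phi> x \<ge> B * (- (E2 * (1 - t))) * t"
        unfolding phit using mn B0 t01 by (intro mult_right_mono mult_left_mono) auto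
      moreover have "B * (- (E2 * (1 - t))) * t \<ge> - (B * E2) / 4"
      proof -
        have "(B * E2) * (t * (1 - t)) \<le> (B * E2) * (1/4)"
          using tprod_le[of t] B0 E2 by (intro mult_left_mono) auto
        then show ?thesis by (simp add: algebra_simps)
      qed
      moreover have "Cw k * deriv \<phi> x = E2 / h2^2" using CwE dphi by (simp add: power2_eq_square)
      moreover have "g x = K2" using xk 2 unfolding g_def I1_def I2_def by auto
      ultimately show ?thesis using fd bb unfolding K2_def by (simp add: algebra_simps)
    next
      case 3
      have dphi: "deriv \<phi> x = 0"
        by (rule deriv_affine_open[OF _ xk, where d = 0]) (use phi_elem[OF k(1)] 3 in auto)
      have "\<phi> x = 0" using phix 3 by simp
      moreover have "x \<notin> I1 \<and> x \<notin> I2"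
      proof (cases "k < p")
        case True
        then have "a k \<le> a (p - 1)" using monole[of k "p - 1"] p1 by auto
        then show ?thesis using xk unfolding I1_def I2_def using mono[of "p - 1" p] p1 by auto
      next
        case False
        then have "k > p + 1" using 3 by auto
        then have "a (p + 1) \<le> a (k - 1)" using monole[of "p + 1" "k - 1"] k by auto
        then show ?thesis using xk unfolding I1_def I2_def using mono[of p "p + 1"] p1 by auto
      qed
      ultimately show ?thesis using fd dphi unfolding g_def by simp
    qed
  qed
  have AE1: "AE x in lebesgue. x \<in> \<Omega> \<longrightarrow> (b x) C1_differentiable_on UNIV \<and>
        (\<forall>\<eta>. 0 \<le> deriv (b x) \<eta> \<and> deriv (b x) \<eta> \<le> B)"
    using car unfolding caratheodory_bounded_def \<Omega>_def by auto
  have AE2: "AE x in lebesgue. x \<notin> a ` {0..n}"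
    by (rule AE_not_in) (simp add: negligible_iff_null_sets[symmetric] negligible_finite)
  have AE3: "AE x in lebesgue. g x \<le> indicator \<Omega> x *\<^sub>R f1 x - indicator \<Omega> x *\<^sub>R f2 x"
    using AE1 AE2
  proof eventually_elim
    case (elim x)
    show ?case
    proof (cases "x \<in> \<Omega>")
      case True
      then show ?thesis using pw[of x] elim by simp
    next
      case False
      then have "x \<notin> I1" "x \<notin> I2" using I1sub I2sub by auto
      then have "g x = 0" unfolding g_def by simp
      then show ?thesis using False by simp
    qed
  qed
  have gi: "integrable lebesgue g"
    unfolding g_def I1_def I2_def
    by (rule Bochner_Integration.integrable_add; rule integrable_mult_left) (simp_all add: ind_int)
  have gint: "integral\<^sup>L lebesgue g = K1 * h1 + K2 * h2"
    unfolding g_def I1_def I2_def h1_def h2_def using h1pos h2pos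
    by (simp add: integral_add ind_int h1_def h2_def)
  have F1: "integrable lebesgue (\<lambda>x. indicator \<Omega> x *\<^sub>R f1 x)" using i1 unfolding set_integrable_def .
  have F2: "integrable lebesgue (\<lambda>x. indicator \<Omega> x *\<^sub>R f2 x)" using i2 unfolding set_integrable_def .
  have "integral\<^sup>L lebesgue g \<le> integral\<^sup>L lebesgue (\<lambda>x. indicator \<Omega> x *\<^sub>R f1 x - indicator \<Omega> x *\<^sub>R f2 x)"
    by (rule integral_mono_AE[OF gi Bochner_Integration.integrable_diff[OF F1 F2] AE3])
  also have "\<dots> = (LINT x:\<Omega>|lebesgue. f1 x) - (LINT x:\<Omega>|lebesgue. f2 x)"
    unfolding set_lebesgue_integral_def by (rule Bochner_Integration.integral_diff[OF F1 F2])
  also have "\<dots> \<le> 0" using l1 l2 by linarith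
  finally have "K1 * h1 + K2 * h2 \<le> 0" using gint by simp
  moreover have "K1 * h1 \<ge> 0" "K2 * h2 > 0" using K1 K2 h1pos h2pos by auto
  ultimately show False by linarith
qed


definition det2 :: "real^2 \<Rightarrow> real^2 \<Rightarrow> real" where
  "det2 u v = u$1 * v$2 - u$2 * v$1"

definition lamc :: "real^2 \<Rightarrow> real^2 \<Rightarrow> real^2 \<Rightarrow> real^2" where
  "lamc p q r = (\<chi> i. if i = 1 then (q$2 - r$2) / det2 (q - p) (r - p) else (r$1 - q$1) / det2 (q - p) (r - p))"
definition lamd :: "real^2 \<Rightarrow> real^2 \<Rightarrow> real^2 \<Rightarrow> real" where
  "lamd p q r = det2 q r / det2 (q - p) (r - p)"
definition lam :: "real^2 \<Rightarrow> real^2 \<Rightarrow> real^2 \<Rightarrow> real^2 \<Rightarrow> real" where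
  "lam p q r x = lamc p q r \<bullet> x + lamd p q r"

lemma inner2: "(u::real^2) \<bullet> v = u$1 * v$1 + u$2 * v$2"
  by (simp add: inner_vec_def sum_2)

lemma lamc_1: "lamc p q r $ 1 = (q$2 - r$2) / det2 (q - p) (r - p)"
  by (simp add: lamc_def)
lemma lamc_2: "lamc p q r $ 2 = (r$1 - q$1) / det2 (q - p) (r - p)"
  by (simp add: lamc_def)

lemma lam_num:
  "lam p q r x = ((q$2 - r$2) * x$1 + (r$1 - q$1) * x$2 + det2 q r) / det2 (q - p) (r - p)"
  unfolding lam_def lamd_def inner2 lamc_1 lamc_2 by (simp add: add_divide_distrib)

lemma lam_vals:
  assumes "det2 (q - p) (r - p) \<noteq> 0"
  shows "lam p q r p = 1" "lam p q r q = 0" "lam p q r r = 0"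
proof -
  have e: "(q$2 - r$2) * p$1 + (r$1 - q$1) * p$2 + det2 q r = det2 (q - p) (r - p)"
    unfolding det2_def by (simp add: algebra_simps)
  show "lam p q r p = 1" unfolding lam_num e using assms by simp
  show "lam p q r q = 0" unfolding lam_num det2_def by (simp add: algebra_simps)
  show "lam p q r r = 0" unfolding lam_num det2_def by (simp add: algebra_simps)
qed

lemma aff_comb:
  fixes c :: "'a::real_inner"
  assumes "sum u S = 1"
  shows "c \<bullet> (\<Sum>s\<in>S. u s *\<^sub>R s) + d = (\<Sum>s\<in>S. u s * (c \<bullet> s + d))"
proof -
  have "c \<bullet> (\<Sum>s\<in>S. u s *\<^sub>R s) = (\<Sum>s\<in>S. u s * (c \<bullet> s))"
    by (simp add: inner_sum_right)
  moreover have "d = (\<Sum>s\<in>S. u s * d)" using assms by (simp add: sum_distrib_right[symmetric])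
  ultimately show ?thesis by (simp add: sum.distrib distrib_left)
qed

lemma lam_comb:
  assumes "det2 (q - p) (r - p) \<noteq> 0" "S \<subseteq> {p, q, r}" "sum u S = 1" "x = (\<Sum>s\<in>S. u s *\<^sub>R s)"
    and "finite S"
  shows "lam p q r x = (if p \<in> S then u p else 0)"
proof -
  have "lam p q r x = (\<Sum>s\<in>S. u s * lam p q r s)"
    unfolding lam_def assms(4) by (rule aff_comb[OF assms(3)])
  also have "\<dots> = (\<Sum>s\<in>S. if s = p then u s else 0)"
  proof (rule sum.cong[OF refl])
    fix s assume "s \<in> S"
    then have "s = p \<or> s = q \<or> s = r" using assms(2) by auto
    then show "u s * lam p q r s = (if s = p then u s else 0)"
      using lam_vals[OF assms(1)] by (cases "s = p") auto
  qed
  also have "\<dots> = (if p \<in> S then u p else 0)"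
    using assms(5) by (simp add: sum.delta)
  finally show ?thesis .
qed

lemma det_ne:
  assumes "\<not> collinear {p, q, r}"
  shows "det2 (q - p) (r - p) \<noteq> 0"
proof
  assume d: "det2 (q - p) (r - p) = 0"
  define a where "a = q - p"
  define b where "b = r - p"
  have d': "a$1 * b$2 = a$2 * b$1" using d unfolding det2_def a_def b_def by simp
  have "collinear {0, a, b}"
  proof (cases "a = 0")
    case True then show ?thesis by (simp add: collinear_lemma)
  next
    case False
    then have n: "a$1 * a$1 + a$2 * a$2 \<noteq> 0"
      by (metis (no_types, lifting) inner2 inner_eq_zero_iff)
    define c where "c = (a \<bullet> b) / (a$1 * a$1 + a$2 * a$2)"
    have "b = c *\<^sub>R a"
    proof -
      have "b$1 = c * a$1"
        unfolding c_def inner2 using n d' by (simp add: field_simps)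
      moreover have "b$2 = c * a$2"
        unfolding c_def inner2 using n d' by (simp add: field_simps)
      ultimately show ?thesis by (simp add: vec_eq_iff forall_2)
    qed
    then show ?thesis by (auto simp: collinear_lemma)
  qed
  then have "collinear {q, p, r}"
    using collinear_3[of q p r] unfolding a_def b_def by simp
  then have "collinear {p, q, r}" by (simp add: insert_commute)
  then show False using assms by simp
qed


lemma tri_cases:
  assumes "card T = 3" "p \<in> T"
  shows "\<exists>q r. T = {p, q, r} \<and> p \<noteq> q \<and> p \<noteq> r \<and> q \<noteq> r"
proof -
  obtain x y z where T: "T = {x, y, z}" "x \<noteq> y" "y \<noteq> z" "x \<noteq> z"
    using assms(1) by (meson card_3_iff)
  consider "p = x" | "p = y" | "p = z" using assms(2) T by auto
  then show ?thesis
  proof cases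
    case 1 then show ?thesis using T by blast
  next
    case 2 then show ?thesis using T by (intro exI[of _ x] exI[of _ z]) auto
  next
    case 3 then show ?thesis using T by (intro exI[of _ x] exI[of _ y]) auto
  qed
qed

lemma tri_indep:
  assumes "\<not> collinear {p, q, r :: real^2}"
  shows "\<not> affine_dependent {p, q, r}"
  using assms collinear_3_eq_affine_dependent by blast

lemma interior_tri:
  fixes p q r :: "real^2"
  assumes nc: "\<not> collinear {p, q, r}" and d: "p \<noteq> q" "p \<noteq> r" "q \<noteq> r"
    and pos: "a > 0" "b > 0" "c > 0" "a + b + c = 1"
  shows "a *\<^sub>R p + b *\<^sub>R q + c *\<^sub>R r \<in> interior (convex hull {p, q, r})"
proof -
  have ind: "\<not> affine_dependent {p, q, r}" using tri_indep[OF nc] .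
  have card: "\<not> card {p, q, r} \<le> DIM(real^2)" using d by simp
  define u where "u v = (if v = p then a else if v = q then b else c)" for v
  have "(\<forall>x\<in>{p, q, r}. 0 < u x) \<and> sum u {p, q, r} = 1 \<and> (\<Sum>x\<in>{p, q, r}. u x *\<^sub>R x) = a *\<^sub>R p + b *\<^sub>R q + c *\<^sub>R r"
    using d pos unfolding u_def by (simp add: algebra_simps)
  then show ?thesis
    unfolding interior_convex_hull_explicit_minimal[OF ind] using card by auto
qed

lemma interior_tri_ne:
  fixes p q r :: "real^2"
  assumes nc: "\<not> collinear {p, q, r}" and d: "p \<noteq> q" "p \<noteq> r" "q \<noteq> r"
  shows "interior (convex hull {p, q, r}) \<noteq> {}"
  using interior_tri[OF assms, of "1/3" "1/3" "1/3"] by auto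

lemma grad_affine:
  fixes f :: "real^2 \<Rightarrow> real"
  assumes "open S" "x \<in> S" "\<forall>y\<in>S. f y = c \<bullet> y + d"
  shows "grad f x = c"
proof -
  have "((\<lambda>y. c \<bullet> y + d) has_derivative (\<lambda>h. c \<bullet> h)) (at x)"
    by (auto intro!: derivative_eq_intros)
  then have "(f has_derivative (\<lambda>h. c \<bullet> h)) (at x)"
    by (rule has_derivative_transform_within_open[OF _ assms(1,2)]) (use assms(3) in auto)
  then have "frechet_derivative f (at x) = (\<lambda>h. c \<bullet> h)"
    by (rule frechet_derivative_at[symmetric])
  then show ?thesis unfolding grad_def by (simp add: inner_axis vec_eq_iff)
qed

lemma lagrange2: "((u::real^2) \<bullet> v)^2 + (det2 u v)^2 = (norm u)^2 * (norm v)^2"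
  unfolding power2_norm_eq_inner inner2 det2_def by (simp add: power2_eq_square algebra_simps)

lemma cot_vangle:
  fixes u v :: "real^2"
  assumes "det2 u v \<noteq> 0"
  shows "cot (vangle u v) = (u \<bullet> v) / \<bar>det2 u v\<bar>"
proof -
  have u: "u \<noteq> 0" and v: "v \<noteq> 0" using assms unfolding det2_def by auto
  have nu: "norm u > 0" and nv: "norm v > 0" using u v by auto
  define k where "k = (u \<bullet> v) / (norm u * norm v)"
  have kb: "\<bar>u \<bullet> v\<bar> \<le> norm u * norm v" by (rule Cauchy_Schwarz_ineq2)
  have k1: "-1 \<le> k" "k \<le> 1" using kb nu nv unfolding k_def by (auto simp: field_simps abs_le_iff)
  have "1 - k^2 = (det2 u v)^2 / (norm u * norm v)^2"
    using lagrange2[of u v] nu nv unfolding k_def by (simp add: field_simps power2_eq_square)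
  then have s: "sin (arccos k) = \<bar>det2 u v\<bar> / (norm u * norm v)"
    using nu nv by (simp add: sin_arccos k1 real_sqrt_divide)
  have "cot (vangle u v) = cos (arccos k) / sin (arccos k)"
    unfolding vangle_def k_def cot_def by simp
  also have "\<dots> = k / (\<bar>det2 u v\<bar> / (norm u * norm v))" using s k1 by simp
  also have "\<dots> = (u \<bullet> v) / \<bar>det2 u v\<bar>" using nu nv unfolding k_def by (simp add: field_simps)
  finally show ?thesis .
qed

lemma tri_measure:
  fixes p q r :: "real^2"
  shows "measure lebesgue (convex hull {p, q, r}) \<ge> \<bar>det2 (q - p) (r - p)\<bar> / 4"
proof -
  define L where "L z = z$1 *\<^sub>R (q - p) + z$2 *\<^sub>R (r - p)" for z :: "real^2"
  have lin: "linear L" unfolding L_def by (auto intro!: linearI simp: algebra_simps)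
  define C where "C = cbox (0::real^2) (\<chi> i. 1/2)"
  have Cm: "C \<in> lmeasurable" unfolding C_def by simp
  have mC: "measure lebesgue C = 1/4"
  proof -
    have "measure lebesgue C = measure lborel C"
      unfolding C_def by (simp add: measure_completion)
    also have "\<dots> = 1/4" unfolding C_def
      by (subst content_cbox_cart) (auto simp: interval_eq_empty_cart forall_2 UNIV_2)
    finally show ?thesis .
  qed
  have mat: "det (matrix L) = det2 (q - p) (r - p)"
    unfolding det_2 matrix_def L_def det2_def by (simp add: axis_def)
  have mL: "measure lebesgue (L ` C) = \<bar>det2 (q - p) (r - p)\<bar> / 4"
    using measure_linear_image[OF lin Cm] mat mC by simp
  have LCm: "L ` C \<in> lmeasurable" using measurable_linear_image[OF lin Cm] .
  have mT: "measure lebesgue ((+) p ` (L ` C)) = measure lebesgue (L ` C)"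
    by (rule measure_translation)
  have sub: "(+) p ` (L ` C) \<subseteq> convex hull {p, q, r}"
  proof
    fix y assume "y \<in> (+) p ` (L ` C)"
    then obtain z where z: "z \<in> C" "y = p + L z" by auto
    have z1: "0 \<le> z$1" "z$1 \<le> 1/2" "0 \<le> z$2" "z$2 \<le> 1/2"
      using z(1) unfolding C_def by (auto simp: mem_box_cart)
    have "y = (1 - z$1 - z$2) *\<^sub>R p + z$1 *\<^sub>R q + z$2 *\<^sub>R r"
      using z(2) unfolding L_def by (simp add: algebra_simps)
    then show "y \<in> convex hull {p, q, r}"
      unfolding convex_hull_3 using z1 by (intro CollectI exI[of _ "1 - z$1 - z$2"] exI[of _ "z$1"] exI[of _ "z$2"]) auto
  qed
  have "measure lebesgue ((+) p ` (L ` C)) \<le> measure lebesgue (convex hull {p, q, r})"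
  proof (rule measure_mono_fmeasurable[OF sub])
    show "(+) p ` L ` C \<in> sets lebesgue" using measurable_translation[OF LCm, of p] by (simp add: fmeasurable_def)
    show "convex hull {p, q, r} \<in> fmeasurable lebesgue"
      by (rule lmeasurable_compact) (auto intro!: finite_imp_compact_convex_hull)
  qed
  then show ?thesis using mT mL by simp
qed

lemma finite_tri_angles:
  assumes "finite T"
  shows "finite (tri_angles T)"
proof -
  have "tri_angles T \<subseteq> (\<lambda>(p, q, r). vangle (q - p) (r - p)) ` (T \<times> T \<times> T)"
    unfolding tri_angles_def by force
  then show ?thesis by (rule finite_subset) (use assms in auto)
qed



lemma aff3:
  fixes c0 :: "'a::real_inner"
  assumes "a + b + c = 1"
  shows "c0 \<bullet> (a *\<^sub>R p + b *\<^sub>R q + c *\<^sub>R r) + d0 = a * (c0 \<bullet> p + d0) + b * (c0 \<bullet> q + d0) + c * (c0 \<bullet> r + d0)"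
proof -
  have "d0 = (a + b + c) * d0" using assms by simp
  then show ?thesis by (simp add: inner_add_right algebra_simps)
qed

lemma lam_3:
  assumes "det2 (q - p) (r - p) \<noteq> 0" "a + b + c = 1"
  shows "lam p q r (a *\<^sub>R p + b *\<^sub>R q + c *\<^sub>R r) = a"
  using aff3[OF assms(2), of "lamc p q r" p q r "lamd p q r"] lam_vals[OF assms(1)]
  unfolding lam_def by simp

lemma avoid_closed:
  assumes "finite F" "\<forall>S\<in>F. closed S"
  shows "\<exists>e>0. \<forall>S\<in>F. y \<notin> S \<longrightarrow> ball y e \<inter> S = {}"
proof -
  define C where "C = \<Union>{S\<in>F. y \<notin> S}"
  have "closed C" unfolding C_def using assms by (intro closed_Union) auto
  moreover have "y \<notin> C" unfolding C_def by auto
  ultimately obtain e where "e > 0" "ball y e \<subseteq> - C"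
    using open_contains_ball[of "- C"] by (auto simp: open_Compl)
  then show ?thesis unfolding C_def by (intro exI[of _ e]) auto
qed

lemma conf_facts:
  assumes "conforming_triangulation \<Omega> \<T>"
  shows "finite \<T>" "\<And>T. T \<in> \<T> \<Longrightarrow> card T = 3" "\<And>T. T \<in> \<T> \<Longrightarrow> \<not> collinear T"
    "\<And>T. T \<in> \<T> \<Longrightarrow> finite T"
    "\<Omega> = interior (\<Union>T\<in>\<T>. convex hull T)"
    "\<And>T1 T2. T1 \<in> \<T> \<Longrightarrow> T2 \<in> \<T> \<Longrightarrow> T1 \<noteq> T2 \<Longrightarrow> convex hull T1 \<inter> convex hull T2 = convex hull (T1 \<inter> T2)"
  using assms unfolding conforming_triangulation_def by (auto intro: card_ge_0_finite)

lemma conf_repr: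
  assumes "conforming_triangulation \<Omega> \<T>" "T \<in> \<T>" "T' \<in> \<T>" "x \<in> convex hull T" "x \<in> convex hull T'"
  shows "\<exists>u. (\<forall>s\<in>T \<inter> T'. 0 \<le> u s) \<and> sum u (T \<inter> T') = 1 \<and> (\<Sum>s\<in>T \<inter> T'. u s *\<^sub>R s) = x"
proof -
  have fin: "finite (T \<inter> T')" using conf_facts(4)[OF assms(1,2)] by simp
  have "x \<in> convex hull (T \<inter> T')"
  proof (cases "T = T'")
    case True then show ?thesis using assms by simp
  next
    case False then show ?thesis using conf_facts(6)[OF assms(1,2,3)] assms(4,5) by auto
  qed
  then show ?thesis using convex_hull_finite[OF fin] by auto
qed

lemma edge_in:
  assumes conf: "conforming_triangulation \<Omega> \<T>" and T: "T \<in> \<T>" "p \<in> T" "q \<in> T" "p \<noteq> q"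
    and pO: "p \<in> \<Omega>" and t: "0 < t" "t < 1"
  shows "(1 - t) *\<^sub>R p + t *\<^sub>R q \<in> \<Omega>"
proof -
  define U where "U = (\<Union>T\<in>\<T>. convex hull T)"
  have OU: "\<Omega> = interior U" using conf_facts(5)[OF conf] unfolding U_def .
  have oO: "open \<Omega>" unfolding OU by simp
  have fin: "finite \<T>" using conf_facts(1)[OF conf] .
  obtain r where Tqpr: "T = {q, p, r}" "q \<noteq> p" "q \<noteq> r" "p \<noteq> r"
  proof -
    obtain x z where "T = {q, x, z}" "q \<noteq> x" "q \<noteq> z" "x \<noteq> z"
      using tri_cases[OF conf_facts(2)[OF conf T(1)] T(3)] by auto
    note xz = this
    then have "p = x \<or> p = z" using T(2) T(4) by auto
    then show ?thesis
    proof
      assume "p = x" then show ?thesis using that xz by auto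
    next
      assume "p = z" then show ?thesis using that[of x] xz by (auto simp: insert_commute)
    qed
  qed
  have nc: "\<not> collinear {q, p, r}" using conf_facts(3)[OF conf T(1)] Tqpr by simp
  have det: "det2 (p - q) (r - q) \<noteq> 0" using det_ne[OF nc] .
  obtain \<delta> where \<delta>: "\<delta> > 0" "ball p \<delta> \<subseteq> \<Omega>" using oO pO open_contains_ball by blast
  have nqp: "norm (q - p) > 0" using T(4) by simp
  define s where "s = min t (\<delta> / (2 * norm (q - p)))"
  have s: "0 < s" "s \<le> t" "s < 1" using t \<delta> nqp unfolding s_def by auto
  define y where "y = (1 - s) *\<^sub>R p + s *\<^sub>R q"
  have "dist p y = s * norm (q - p)"
    unfolding y_def dist_norm using s by (simp add: algebra_simps norm_minus_commute flip: scaleR_diff_right)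
  also have "\<dots> \<le> \<delta> / 2" using nqp \<delta> unfolding s_def by (simp add: min_def field_simps)
  finally have "y \<in> ball p \<delta>" using \<delta> by simp
  then have yO: "y \<in> \<Omega>" using \<delta> by auto
  have lamy: "lam q p r y = s"
  proof -
    have "y = s *\<^sub>R q + (1 - s) *\<^sub>R p + 0 *\<^sub>R r" unfolding y_def by simp
    then show ?thesis using lam_3[OF det, of s "1 - s" 0] by simp
  qed
  have yq: "q \<in> T'" if T': "T' \<in> \<T>" "y \<in> convex hull T'" for T'
  proof -
    have yT: "y \<in> convex hull T" unfolding Tqpr y_def convex_hull_3
      using s by (intro CollectI exI[of _ "s"] exI[of _ "1 - s"] exI[of _ 0]) auto
    obtain u where u: "sum u (T \<inter> T') = 1" "(\<Sum>s\<in>T \<inter> T'. u s *\<^sub>R s) = y"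
      using conf_repr[OF conf T(1) T' (1) yT T'(2)] by auto
    have "lam q p r y = (if q \<in> T \<inter> T' then u q else 0)"
      by (rule lam_comb[OF det]) (use u Tqpr conf_facts(4)[OF conf T(1)] in auto)
    then show ?thesis using lamy s by (auto split: if_splits)
  qed
  obtain e1 where e1: "e1 > 0" "\<forall>S\<in>(\<lambda>T. convex hull T) ` \<T>. y \<notin> S \<longrightarrow> ball y e1 \<inter> S = {}"
    using avoid_closed[of "(\<lambda>T. convex hull T) ` \<T>" y] fin conf_facts(4)[OF conf]
    by (auto intro: compact_imp_closed finite_imp_compact_convex_hull)
  obtain e2 where e2: "e2 > 0" "ball y e2 \<subseteq> \<Omega>" using oO yO open_contains_ball by blast
  define e where "e = min e1 e2"
  have e: "e > 0" "ball y e \<subseteq> \<Omega>" using e1 e2 unfolding e_def by auto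
  have eT: "y \<in> convex hull T'" if "T' \<in> \<T>" "z \<in> ball y e" "z \<in> convex hull T'" for T' z
  proof (rule ccontr)
    assume "y \<notin> convex hull T'"
    then have "ball y e1 \<inter> convex hull T' = {}" using e1(2) that(1) by auto
    moreover have "z \<in> ball y e1" using that(2) unfolding e_def by auto
    ultimately show False using that(3) by auto
  qed
  define \<rho> where "\<rho> = (1 - t) / (1 - s)"
  have \<rho>: "0 < \<rho>" "\<rho> \<le> 1" using s t unfolding \<rho>_def by (auto simp: field_simps)
  define x where "x = (1 - t) *\<^sub>R p + t *\<^sub>R q"
  have yq1: "y - q = (1 - s) *\<^sub>R (p - q)" unfolding y_def by (simp add: algebra_simps)
  have xq1: "x - q = (1 - t) *\<^sub>R (p - q)" unfolding x_def by (simp add: algebra_simps)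
  have rs: "\<rho> * (1 - s) = 1 - t" using s unfolding \<rho>_def by simp
  have xq: "x - q = \<rho> *\<^sub>R (y - q)"
    unfolding yq1 xq1 scaleR_scaleR rs ..
  have "ball x (\<rho> * e) \<subseteq> U"
  proof
    fix z' assume z': "z' \<in> ball x (\<rho> * e)"
    define z where "z = q + (1 / \<rho>) *\<^sub>R (z' - q)"
    have yq2: "y - q = (1 / \<rho>) *\<^sub>R (x - q)" using xq \<rho> by simp
    have "z - y = (1 / \<rho>) *\<^sub>R (z' - q) - (y - q)" unfolding z_def by (simp add: algebra_simps)
    also have "\<dots> = (1 / \<rho>) *\<^sub>R (z' - x)" unfolding yq2 by (simp add: scaleR_diff_right)
    finally have "z - y = (1 / \<rho>) *\<^sub>R (z' - x)" .
    then have "norm (z - y) = norm (z' - x) / \<rho>" using \<rho> by simp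
    then have "dist y z = norm (z' - x) / \<rho>" by (simp add: dist_norm norm_minus_commute)
    also have "\<dots> < e" using z' \<rho> by (simp add: dist_norm norm_minus_commute field_simps)
    finally have zb: "z \<in> ball y e" by simp
    then have "z \<in> U" using e OU interior_subset by blast
    then obtain T' where T': "T' \<in> \<T>" "z \<in> convex hull T'" unfolding U_def by auto
    have "y \<in> convex hull T'" using eT[OF T'(1) zb T'(2)] .
    then have "q \<in> T'" by (rule yq[OF T'(1)])
    then have "q \<in> convex hull T'" by (rule hull_inc)
    moreover have "z' = (1 - \<rho>) *\<^sub>R q + \<rho> *\<^sub>R z"
    proof -
      have "\<rho> *\<^sub>R z = \<rho> *\<^sub>R q + (z' - q)" unfolding z_def using \<rho> by (simp add: scaleR_add_right)
      then show ?thesis by (simp add: algebra_simps)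
    qed
    ultimately have "z' \<in> convex hull T'"
      using T'(2) \<rho> convexD[OF convex_convex_hull, of q T' z "1 - \<rho>" \<rho>] by auto
    then show "z' \<in> U" unfolding U_def using T'(1) by auto
  qed
  then have "x \<in> interior U" using \<rho> e by (meson mem_interior mult_pos_pos)
  then show ?thesis unfolding x_def OU .
qed


lemma poly_id:
  fixes c1 c2 p1 p2 q1 q2 r1 r2 :: real
  shows "((q1 - p1)*(r2 - p2) - (q2 - p2)*(r1 - p1)) * (c1*(q2 - r2) + c2*(r1 - q1)) = (c1*(p1 - q1) + c2*(p2-q2)) * ((p1 - r1)*(q1 - r1) + (p2 - r2)*(q2 - r2)) + (c1*(p1-r1) + c2*(p2 - r2)) * ((p1-q1)*(r1-q1) + (p2-q2)*(r2-q2))"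
  by algebra

lemma grad_identity:
  fixes p q r cw :: "real^2"
  assumes "det2 (q - p) (r - p) \<noteq> 0"
  shows "(cw \<bullet> lamc p q r) * (det2 (q - p) (r - p))^2 =
         (cw \<bullet> (p - q)) * ((p - r) \<bullet> (q - r)) + (cw \<bullet> (p - r)) * ((p - q) \<bullet> (r - q))"
proof -
  define D where "D = det2 (q - p) (r - p)"
  have D: "D \<noteq> 0" using assms D_def by simp
  have "cw \<bullet> lamc p q r = (cw$1 * (q$2 - r$2) + cw$2 * (r$1 - q$1)) / D"
    unfolding inner2 lamc_1 lamc_2 D_def[symmetric] by (simp add: add_divide_distrib)
  then have "(cw \<bullet> lamc p q r) * D^2 = D * (cw$1 * (q$2 - r$2) + cw$2 * (r$1 - q$1))"
    using D by (simp add: power2_eq_square)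
  also have "\<dots> = (cw \<bullet> (p - q)) * ((p - r) \<bullet> (q - r)) + (cw \<bullet> (p - r)) * ((p - q) \<bullet> (r - q))"
    unfolding D_def det2_def inner2 vector_minus_component by (rule poly_id)
  finally show ?thesis unfolding D_def .
qed

lemma key_geom:
  fixes p q r cw :: "real^2"
  assumes det: "det2 (q - p) (r - p) \<noteq> 0"
    and m: "m \<le> cot (vangle (p - r) (q - r))" "m \<le> cot (vangle (p - q) (r - q))"
    and area: "7 * B * A < 3 * m" and A: "A \<ge> \<bar>det2 (q - p) (r - p)\<bar> / 4" and B0: "B \<ge> 0"
    and D: "Dq = cw \<bullet> (p - q)" "Dr = cw \<bullet> (p - r)" "Dq \<ge> 0" "Dr \<ge> 0"
  shows "cw \<bullet> lamc p q r - B * (Dq + Dr) / 4 \<ge> 0"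
    and "Dq + Dr > 0 \<Longrightarrow> cw \<bullet> lamc p q r - B * (Dq + Dr) / 4 > 0"
proof -
  define \<Delta> where "\<Delta> = det2 (q - p) (r - p)"
  have \<Delta>: "\<Delta> \<noteq> 0" "\<bar>\<Delta>\<bar> > 0" using det \<Delta>_def by auto
  have d1: "det2 (p - r) (q - r) = \<Delta>" unfolding \<Delta>_def det2_def by (simp add: algebra_simps)
  have d2: "det2 (p - q) (r - q) = - \<Delta>" unfolding \<Delta>_def det2_def by (simp add: algebra_simps)
  define cr where "cr = cot (vangle (p - r) (q - r))"
  define cq where "cq = cot (vangle (p - q) (r - q))"
  have cr: "(p - r) \<bullet> (q - r) = cr * \<bar>\<Delta>\<bar>"
    using cot_vangle[of "p - r" "q - r"] d1 \<Delta> unfolding cr_def by simp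
  have cq: "(p - q) \<bullet> (r - q) = cq * \<bar>\<Delta>\<bar>"
    using cot_vangle[of "p - q" "r - q"] d2 \<Delta> unfolding cq_def by simp
  define G where "G = cw \<bullet> lamc p q r"
  have "G * \<Delta>^2 = Dq * (cr * \<bar>\<Delta>\<bar>) + Dr * (cq * \<bar>\<Delta>\<bar>)"
    using grad_identity[OF det, of cw] unfolding G_def \<Delta>_def[symmetric] D(1,2)[symmetric] cr cq .
  moreover have "\<Delta>^2 = \<bar>\<Delta>\<bar> * \<bar>\<Delta>\<bar>" by (simp add: power2_eq_square)
  ultimately have "(G * \<bar>\<Delta>\<bar>) * \<bar>\<Delta>\<bar> = (Dq * cr + Dr * cq) * \<bar>\<Delta>\<bar>"
    by (simp add: algebra_simps)
  then have "G * \<bar>\<Delta>\<bar> = Dq * cr + Dr * cq" using \<Delta> by simp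
  then have G: "G = (Dq * cr + Dr * cq) / \<bar>\<Delta>\<bar>"
    using \<Delta> by (simp add: eq_divide_eq)
  have Apos: "A \<ge> 0" using A by (meson abs_ge_zero divide_nonneg_pos order_trans zero_less_numeral)
  have m0: "m > 0" using area B0 Apos by (smt (verit) mult_nonneg_nonneg)
  have "7 * B * (\<bar>\<Delta>\<bar> / 4) \<le> 7 * B * A" using A B0 unfolding \<Delta>_def by (intro mult_left_mono) auto
  then have "B * \<bar>\<Delta>\<bar> < 4 * m" using area m0 by linarith
  then have k: "B / 4 < m / \<bar>\<Delta>\<bar>" using \<Delta> by (simp add: field_simps)
  define \<kappa> where "\<kappa> = m / \<bar>\<Delta>\<bar> - B / 4"
  have \<kappa>: "\<kappa> > 0" using k unfolding \<kappa>_def by simp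
  have "cr / \<bar>\<Delta>\<bar> \<ge> m / \<bar>\<Delta>\<bar>" "cq / \<bar>\<Delta>\<bar> \<ge> m / \<bar>\<Delta>\<bar>"
    using m \<Delta> unfolding cr_def cq_def by (auto intro: divide_right_mono)
  then have "Dq * (cr / \<bar>\<Delta>\<bar> - B / 4) \<ge> Dq * \<kappa>" "Dr * (cq / \<bar>\<Delta>\<bar> - B / 4) \<ge> Dr * \<kappa>"
    using D(3,4) unfolding \<kappa>_def by (auto intro: mult_left_mono)
  moreover have "G - B * (Dq + Dr) / 4 = Dq * (cr / \<bar>\<Delta>\<bar> - B / 4) + Dr * (cq / \<bar>\<Delta>\<bar> - B / 4)"
    unfolding G using \<Delta> by (simp add: field_simps)
  ultimately have main: "G - B * (Dq + Dr) / 4 \<ge> (Dq + Dr) * \<kappa>" by (simp add: algebra_simps)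

  show "cw \<bullet> lamc p q r - B * (Dq + Dr) / 4 \<ge> 0" using main \<kappa> D(3,4) unfolding G_def
    by (smt (verit) mult_nonneg_nonneg)
  show "cw \<bullet> lamc p q r - B * (Dq + Dr) / 4 > 0" if "Dq + Dr > 0"
    using main \<kappa> that unfolding G_def by (smt (verit) mult_pos_pos)
qed

lemma thm2D:
  fixes b :: "real^2 \<Rightarrow> real \<Rightarrow> real"
  assumes conf: "conforming_triangulation \<Omega> \<T>"
    and car: "caratheodory_bounded \<Omega> b B"
    and sub: "discrete_subsol \<Omega> (P1_2D \<Omega> \<T>) (\<lambda>u v x. grad u x \<bullet> grad v x) b u1"
    and sup: "discrete_supersol \<Omega> (P1_2D \<Omega> \<T>) (\<lambda>u v x. grad u x \<bullet> grad v x) b u2"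
    and area: "\<forall>T\<in>\<T>. 7 * B * measure lebesgue (convex hull T) < 3 * Min (cot ` tri_angles T)"
  shows "\<forall>x\<in>\<Omega>. u1 x \<le> u2 x"
proof (rule ccontr)
  assume "\<not> (\<forall>x\<in>\<Omega>. u1 x \<le> u2 x)"
  then obtain x0 where x0: "x0 \<in> \<Omega>" "u1 x0 > u2 x0" by auto
  have B0: "B \<ge> 0" using car unfolding caratheodory_bounded_def by auto
  define U where "U = (\<Union>T\<in>\<T>. convex hull T)"
  have fin: "finite \<T>" using conf_facts(1)[OF conf] .
  have card3: "\<And>T. T \<in> \<T> \<Longrightarrow> card T = 3" using conf_facts(2)[OF conf] .
  have ncol: "\<And>T. T \<in> \<T> \<Longrightarrow> \<not> collinear T" using conf_facts(3)[OF conf] .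
  have finT: "\<And>T. T \<in> \<T> \<Longrightarrow> finite T" using conf_facts(4)[OF conf] .
  have OU: "\<Omega> = interior U" using conf_facts(5)[OF conf] unfolding U_def .
  have oO: "open \<Omega>" unfolding OU by simp
  have OsubU: "\<Omega> \<subseteq> U" unfolding OU by (rule interior_subset)
  have cU: "closed U" unfolding U_def using fin finT
    by (intro closed_UN) (auto intro: compact_imp_closed finite_imp_compact_convex_hull)
  have clO: "closure \<Omega> \<subseteq> U" using OsubU cU by (simp add: closure_minimal)
  have tri: "\<exists>q r. T = {v, q, r} \<and> v \<noteq> q \<and> v \<noteq> r \<and> q \<noteq> r \<and> det2 (q - v) (r - v) \<noteq> 0"
    if Tv: "T \<in> \<T>" "v \<in> T" for T v
  proof -
    obtain q r where "T = {v, q, r}" "v \<noteq> q" "v \<noteq> r" "q \<noteq> r"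
      using tri_cases[OF card3[OF Tv(1)] Tv(2)] by auto
    moreover have "det2 (q - v) (r - v) \<noteq> 0" using det_ne ncol[OF Tv(1)] calculation by simp
    ultimately show ?thesis by blast
  qed
  have node_hull: "v \<in> T'" if H: "T \<in> \<T>" "T' \<in> \<T>" "v \<in> T" "v \<in> convex hull T'" for T T' v
  proof -
    obtain q r where T: "T = {v, q, r}" "det2 (q - v) (r - v) \<noteq> 0" using tri[OF H(1,3)] by auto
    obtain u where u: "sum u (T \<inter> T') = 1" "(\<Sum>s\<in>T \<inter> T'. u s *\<^sub>R s) = v"
      using conf_repr[OF conf H(1,2) hull_inc[OF H(3)] H(4)] by auto
    have "lam v q r v = (if v \<in> T \<inter> T' then u v else 0)"
      by (rule lam_comb[OF T(2)]) (use u T finT[OF H(1)] in auto)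
    then show ?thesis using lam_vals(1)[OF T(2)] by (auto split: if_splits)
  qed
  have u1V: "u1 \<in> P1_2D \<Omega> \<T>" using sub unfolding discrete_subsol_def by auto
  have u2V: "u2 \<in> P1_2D \<Omega> \<T>" using sup unfolding discrete_supersol_def by auto
  obtain c1 d1 where cd1: "\<forall>T\<in>\<T>. \<forall>x\<in>convex hull T. u1 x = c1 T \<bullet> x + d1 T"
  proof -
    have "\<forall>T\<in>\<T>. \<exists>c d. \<forall>x\<in>convex hull T. u1 x = c \<bullet> x + d" using u1V unfolding P1_2D_def by simp
    then show ?thesis using that by metis
  qed
  obtain c2 d2 where cd2: "\<forall>T\<in>\<T>. \<forall>x\<in>convex hull T. u2 x = c2 T \<bullet> x + d2 T"
  proof -
    have "\<forall>T\<in>\<T>. \<exists>c d. \<forall>x\<in>convex hull T. u2 x = c \<bullet> x + d" using u2V unfolding P1_2D_def by simp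
    then show ?thesis using that by metis
  qed
  have u1F: "\<And>x. x \<in> frontier \<Omega> \<Longrightarrow> u1 x = 0" using u1V unfolding P1_2D_def by auto
  have u2F: "\<And>x. x \<in> frontier \<Omega> \<Longrightarrow> u2 x = 0" using u2V unfolding P1_2D_def by auto
  define w where "w x = u1 x - u2 x" for x
  define cw where "cw T = c1 T - c2 T" for T
  define dw where "dw T = d1 T - d2 T" for T
  have cdw: "\<And>T x. T \<in> \<T> \<Longrightarrow> x \<in> convex hull T \<Longrightarrow> w x = cw T \<bullet> x + dw T"
    using cd1 cd2 unfolding w_def cw_def dw_def by (simp add: inner_diff_left)
  define N where "N = \<Union>\<T>"
  have finN: "finite N" unfolding N_def using fin finT by auto
  obtain T0 where T0: "T0 \<in> \<T>" "x0 \<in> convex hull T0" using x0(1) OsubU unfolding U_def by auto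
  have "\<exists>v\<in>T0. w v > 0"
  proof (rule ccontr)
    assume neg: "\<not> ?thesis"
    obtain u where u: "\<forall>s\<in>T0. 0 \<le> u s" "sum u T0 = 1" "(\<Sum>s\<in>T0. u s *\<^sub>R s) = x0"
      using T0(2) convex_hull_finite[OF finT[OF T0(1)]] by auto
    have "w x0 = cw T0 \<bullet> (\<Sum>s\<in>T0. u s *\<^sub>R s) + dw T0" using cdw[OF T0] u(3) by simp
    also have "\<dots> = (\<Sum>s\<in>T0. u s * (cw T0 \<bullet> s + dw T0))" by (rule aff_comb[OF u(2)])
    also have "\<dots> = (\<Sum>s\<in>T0. u s * w s)"
      using cdw[OF T0(1) hull_inc] by (intro sum.cong) auto
    also have "\<dots> \<le> 0" using neg u(1) by (intro sum_nonpos) (simp add: mult_nonneg_nonpos not_less)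
    finally show False using x0(2) unfolding w_def by simp
  qed
  then obtain v0 where v0: "v0 \<in> N" "w v0 > 0" using T0(1) unfolding N_def by auto
  define M where "M = Max (w ` N)"
  have Mge: "\<And>v. v \<in> N \<Longrightarrow> w v \<le> M" unfolding M_def using finN by auto
  have Mpos: "M > 0" using Mge[OF v0(1)] v0(2) by linarith
  have "M \<in> w ` N" unfolding M_def using finN v0(1) by (intro Max_in) auto
  define P where "P = {v\<in>N. w v = M}"
  have Pne: "P \<noteq> {}" "finite P" using \<open>M \<in> w ` N\<close> finN unfolding P_def by auto
  have "Max ((\<lambda>v. v$1) ` P) \<in> (\<lambda>v. v$1) ` P" using Pne by (intro Max_in) auto
  then obtain p where pP: "p \<in> P" and pm: "p$1 = Max ((\<lambda>v. v$1) ` P)" by auto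
  have pmax: "\<And>v. v \<in> P \<Longrightarrow> v$1 \<le> p$1" unfolding pm using Pne by auto
  have pN: "p \<in> N" and wp: "w p = M" using pP unfolding P_def by auto
  obtain Tp where Tp: "Tp \<in> \<T>" "p \<in> Tp" using pN unfolding N_def by auto
  have pO: "p \<in> \<Omega>"
  proof -
    obtain q r where Tqr: "Tp = {p, q, r}" "p \<noteq> q" "p \<noteq> r" "q \<noteq> r" using tri[OF Tp] by auto
    have "interior (convex hull Tp) \<noteq> {}"
      using interior_tri_ne[of p q r] ncol[OF Tp(1)] Tqr by simp
    then have "closure (interior (convex hull Tp)) = convex hull Tp"
      using convex_closure_interior[of "convex hull Tp"] finT[OF Tp(1)]
      by (simp add: closure_closed compact_imp_closed finite_imp_compact_convex_hull)
    moreover have "interior (convex hull Tp) \<subseteq> \<Omega>"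
      unfolding OU U_def using Tp(1) by (intro interior_mono) auto
    ultimately have "convex hull Tp \<subseteq> closure \<Omega>" by (metis closure_mono)
    then have "p \<in> closure \<Omega>" using hull_inc[OF Tp(2)] by auto
    moreover have "p \<notin> frontier \<Omega>" using u1F u2F wp Mpos unfolding w_def by auto
    ultimately show ?thesis using oO by (simp add: frontier_def interior_open)
  qed
  define St where "St = {T\<in>\<T>. p \<in> T}"
  have QR0: "\<forall>T\<in>St. \<exists>qr. T = {p, fst qr, snd qr} \<and> p \<noteq> fst qr \<and> p \<noteq> snd qr \<and> fst qr \<noteq> snd qr
          \<and> det2 (fst qr - p) (snd qr - p) \<noteq> 0"
  proof
    fix T assume "T \<in> St"
    then obtain q r where "T = {p, q, r} \<and> p \<noteq> q \<and> p \<noteq> r \<and> q \<noteq> r \<and> det2 (q - p) (r - p) \<noteq> 0"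
      using tri unfolding St_def by blast
    then show "\<exists>qr. T = {p, fst qr, snd qr} \<and> p \<noteq> fst qr \<and> p \<noteq> snd qr \<and> fst qr \<noteq> snd qr
          \<and> det2 (fst qr - p) (snd qr - p) \<noteq> 0" by (intro exI[of _ "(q, r)"]) simp
  qed
  obtain QR where QR: "\<forall>T\<in>St. T = {p, fst (QR T), snd (QR T)} \<and> p \<noteq> fst (QR T) \<and> p \<noteq> snd (QR T)
      \<and> fst (QR T) \<noteq> snd (QR T) \<and> det2 (fst (QR T) - p) (snd (QR T) - p) \<noteq> 0"
    using bchoice[OF QR0] by blast
  define Q where "Q T = fst (QR T)" for T
  define R where "R T = snd (QR T)" for T
  have QRT: "{p, Q T, R T} = T" "p \<noteq> Q T" "p \<noteq> R T" "Q T \<noteq> R T" "det2 (Q T - p) (R T - p) \<noteq> 0"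
    if "T \<in> St" for T using QR that unfolding Q_def R_def by auto
  have QinT: "Q T \<in> T" "R T \<in> T" if "T \<in> St" for T
  proof -
    have "Q T \<in> {p, Q T, R T}" "R T \<in> {p, Q T, R T}" by auto
    then show "Q T \<in> T" "R T \<in> T" using QRT(1)[OF that] by simp_all
  qed
  have StT: "\<And>T. T \<in> St \<Longrightarrow> T \<in> \<T>" "\<And>T. T \<in> St \<Longrightarrow> p \<in> T" unfolding St_def by auto
  define lp where "lp T x = lam p (Q T) (R T) x" for T x
  have lp_repr: "lp T x = (if p \<in> S then u p else 0)"
    if "T \<in> St" "S \<subseteq> T" "finite S" "sum u S = 1" "x = (\<Sum>s\<in>S. u s *\<^sub>R s)" for T S u x
    unfolding lp_def by (rule lam_comb[OF QRT(5)[OF that(1)]]) (use that QRT(1)[OF that(1)] in auto)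
  have lp_3: "lp T (a *\<^sub>R p + b *\<^sub>R Q T + c *\<^sub>R R T) = a" if "T \<in> St" "a + b + c = 1" for T a b c
    unfolding lp_def by (rule lam_3[OF QRT(5)[OF that(1)] that(2)])
  define \<phi> where "\<phi> x = (if \<exists>T\<in>St. x \<in> convex hull T then lp (SOME T. T \<in> St \<and> x \<in> convex hull T) x else 0)" for x
  have phi_on: "\<phi> x = (if p \<in> T then lp T x else 0)" if H: "T \<in> \<T>" "x \<in> convex hull T" for T x
  proof (cases "\<exists>T'\<in>St. x \<in> convex hull T'")
    case True
    define T' where "T' = (SOME T. T \<in> St \<and> x \<in> convex hull T)"
    have T': "T' \<in> St" "x \<in> convex hull T'"
      using someI_ex[of "\<lambda>T. T \<in> St \<and> x \<in> convex hull T"] True unfolding T'_def by auto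
    have phx: "\<phi> x = lp T' x" unfolding \<phi>_def T'_def using True by simp
    obtain u where u: "sum u (T \<inter> T') = 1" "(\<Sum>s\<in>T \<inter> T'. u s *\<^sub>R s) = x"
      using conf_repr[OF conf H(1) StT(1)[OF T'(1)] H(2) T'(2)] by auto
    have f: "finite (T \<inter> T')" using finT[OF H(1)] by simp
    have l1: "lp T' x = (if p \<in> T \<inter> T' then u p else 0)"
      by (rule lp_repr[OF T'(1) _ f u(1) u(2)[symmetric]]) auto
    show ?thesis
    proof (cases "p \<in> T")
      case True
      then have "T \<in> St" using H(1) unfolding St_def by simp
      then have "lp T x = (if p \<in> T \<inter> T' then u p else 0)"
        by (rule lp_repr[OF _ _ f u(1) u(2)[symmetric]]) auto
      then show ?thesis using phx l1 True by simp
    next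
      case False
      then show ?thesis using phx l1 by simp
    qed
  next
    case False
    then have "p \<notin> T" using H unfolding St_def by auto
    then show ?thesis using False unfolding \<phi>_def by simp
  qed
  have phi_hull: "\<phi> x = a" if H: "T \<in> St" "x = a *\<^sub>R p + b *\<^sub>R Q T + c *\<^sub>R R T" "a + b + c = 1"
      "x \<in> convex hull T" for T x a b c
    using phi_on[OF StT(1)[OF H(1)] H(4)] StT(2)[OF H(1)] lp_3[OF H(1) H(3)] H(2) by simp
  have hull3: "\<exists>a b c. 0 \<le> a \<and> 0 \<le> b \<and> 0 \<le> c \<and> a + b + c = 1 \<and> x = a *\<^sub>R p + b *\<^sub>R Q T + c *\<^sub>R R T"
    if "T \<in> St" "x \<in> convex hull T" for T x
  proof -
    have "x \<in> convex hull {p, Q T, R T}" using that(2) QRT(1)[OF that(1)] by simp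
    then show ?thesis unfolding convex_hull_3 by auto
  qed
  have phi_nonneg: "\<phi> x \<ge> 0" if xU: "x \<in> U" for x
  proof -
    obtain T where T: "T \<in> \<T>" "x \<in> convex hull T" using xU unfolding U_def by auto
    show ?thesis
    proof (cases "p \<in> T")
      case True
      then have TS: "T \<in> St" using T unfolding St_def by simp
      obtain a b c where abc: "0 \<le> a" "0 \<le> b" "0 \<le> c" "a + b + c = 1" "x = a *\<^sub>R p + b *\<^sub>R Q T + c *\<^sub>R R T"
        using hull3[OF TS T(2)] by blast
      show ?thesis using phi_hull[OF TS abc(5) abc(4) T(2)] abc by simp
    next
      case False then show ?thesis using phi_on[OF T] by simp
    qed
  qed
  have phi_front: "\<phi> x = 0" if xF: "x \<in> frontier \<Omega>" for x
  proof (rule ccontr)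
    assume ne: "\<phi> x \<noteq> 0"
    have xnO: "x \<notin> \<Omega>" using xF oO by (simp add: frontier_def interior_open)
    have "x \<in> U" using xF clO by (auto simp: frontier_def)
    then obtain T where T: "T \<in> \<T>" "x \<in> convex hull T" unfolding U_def by auto
    have pT: "p \<in> T" using ne phi_on[OF T] by (auto split: if_splits)
    then have TS: "T \<in> St" using T unfolding St_def by simp
    obtain a b c where abc: "0 \<le> a" "0 \<le> b" "0 \<le> c" "a + b + c = 1" "x = a *\<^sub>R p + b *\<^sub>R Q T + c *\<^sub>R R T"
      using hull3[OF TS T(2)] by blast
    have a0: "a > 0" using phi_hull[OF TS abc(5) abc(4) T(2)] ne abc(1) by simp
    have ncT: "\<not> collinear {p, Q T, R T}" using ncol[OF T(1)] QRT(1)[OF TS] by simp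
    have "x \<in> \<Omega>"
    proof -
      consider "b > 0 \<and> c > 0" | "b = 0 \<and> c = 0" | "b > 0 \<and> c = 0" | "b = 0 \<and> c > 0"
        using abc by linarith
      then show ?thesis
      proof cases
        case 1
        then have "x \<in> interior (convex hull {p, Q T, R T})"
          using interior_tri[OF ncT QRT(2,3,4)[OF TS] a0 _ _ abc(4)] abc(5) by auto
        moreover have "interior (convex hull {p, Q T, R T}) \<subseteq> \<Omega>"
          unfolding OU U_def using T(1) QRT(1)[OF TS] by (intro interior_mono) auto
        ultimately show ?thesis by auto
      next
        case 2
        then show ?thesis using abc pO by simp
      next
        case 3
        then have "x = (1 - b) *\<^sub>R p + b *\<^sub>R Q T" "b < 1" using abc a0 by auto
        then show ?thesis
          using edge_in[OF conf T(1) pT QinT(1)[OF TS] QRT(2)[OF TS] pO, of b] 3 by auto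
      next
        case 4
        then have "x = (1 - c) *\<^sub>R p + c *\<^sub>R R T" "c < 1" using abc a0 by auto
        then show ?thesis
          using edge_in[OF conf T(1) pT QinT(2)[OF TS] QRT(3)[OF TS] pO, of c] 4 by auto
      qed
    qed
    then show False using xnO by simp
  qed
  have phiV: "\<phi> \<in> P1_2D \<Omega> \<T>"
  proof -
    have "\<exists>c d. \<forall>x\<in>convex hull T. \<phi> x = c \<bullet> x + d" if T: "T \<in> \<T>" for T
    proof (cases "p \<in> T")
      case True
      show ?thesis
        by (rule exI[of _ "lamc p (Q T) (R T)"], rule exI[of _ "lamd p (Q T) (R T)"])
           (use phi_on[OF T] True in \<open>simp add: lp_def lam_def\<close>)
    next
      case False
      show ?thesis by (rule exI[of _ 0], rule exI[of _ 0]) (use phi_on[OF T] False in simp)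
    qed
    then show ?thesis unfolding P1_2D_def using phi_front by auto
  qed
  obtain e1 where e1: "e1 > 0" "\<forall>S\<in>(\<lambda>T. convex hull T) ` \<T>. p \<notin> S \<longrightarrow> ball p e1 \<inter> S = {}"
    using avoid_closed[of "(\<lambda>T. convex hull T) ` \<T>" p] fin finT
    by (auto intro: compact_imp_closed finite_imp_compact_convex_hull)
  obtain e2 where e2: "e2 > 0" "ball p e2 \<subseteq> \<Omega>" using oO pO open_contains_ball by blast
  define e where "e = min e1 e2"
  define z where "z = p + (e / 2) *\<^sub>R axis 1 (1::real)"
  have ze: "z \<in> ball p e1" "z \<in> ball p e2" unfolding z_def e_def using e1 e2 by (auto simp: dist_norm)
  then have "z \<in> U" using e2 OsubU by auto
  then obtain Ts where Ts: "Ts \<in> \<T>" "z \<in> convex hull Ts" unfolding U_def by auto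
  have "p \<in> convex hull Ts"
  proof (rule ccontr)
    assume "p \<notin> convex hull Ts"
    then have "ball p e1 \<inter> convex hull Ts = {}" using e1(2) Ts(1) by auto
    then show False using ze Ts(2) by auto
  qed
  then have TsS: "Ts \<in> St" using node_hull[OF Tp(1) Ts(1) Tp(2)] Ts(1) unfolding St_def by auto
  have Tsmall: "w (Q Ts) < M \<or> w (R Ts) < M"
  proof (rule ccontr)
    assume "\<not> ?thesis"
    moreover have "Q Ts \<in> N" "R Ts \<in> N" using QinT[OF TsS] Ts(1) unfolding N_def by auto
    ultimately have "Q Ts \<in> P" "R Ts \<in> P" using Mge unfolding P_def by force+
    then have q1: "Q Ts $ 1 \<le> p $ 1" "R Ts $ 1 \<le> p $ 1" using pmax by auto
    obtain a b c where abc: "0 \<le> a" "0 \<le> b" "0 \<le> c" "a + b + c = 1" "z = a *\<^sub>R p + b *\<^sub>R Q Ts + c *\<^sub>R R Ts"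
      using hull3[OF TsS Ts(2)] by blast
    have "z $ 1 = a * p$1 + b * Q Ts $ 1 + c * R Ts $ 1" using abc(5) by simp
    also have "\<dots> \<le> a * p$1 + b * p$1 + c * p$1"
      using q1 abc by (intro add_mono mult_left_mono) auto
    also have "\<dots> = (a + b + c) * p$1" by (simp add: algebra_simps)
    also have "\<dots> = p$1" using abc(4) by simp
    finally have "z $ 1 \<le> p $ 1" .
    moreover have "z $ 1 = p $ 1 + e / 2" unfolding z_def by (simp add: axis_def)
    moreover have "e > 0" unfolding e_def using e1 e2 by simp
    ultimately show False by simp
  qed
  define Dq where "Dq T = M - w (Q T)" for T
  define Dr where "Dr T = M - w (R T)" for T
  define K where "K T = cw T \<bullet> lamc p (Q T) (R T) - B * (Dq T + Dr T) / 4" for T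
  have Kfacts: "K T \<ge> 0 \<and> (Dq T + Dr T > 0 \<longrightarrow> K T > 0)" if TS: "T \<in> St" for T
  proof -
    have T: "T \<in> \<T>" using StT(1)[OF TS] .
    have QN: "Q T \<in> N" "R T \<in> N" using QinT[OF TS] T unfolding N_def by auto
    have Dnn: "Dq T \<ge> 0" "Dr T \<ge> 0" using Mge[OF QN(1)] Mge[OF QN(2)] unfolding Dq_def Dr_def by auto
    have wv: "w v = cw T \<bullet> v + dw T" if "v \<in> T" for v using cdw[OF T hull_inc[OF that]] .
    have Dq: "Dq T = cw T \<bullet> (p - Q T)" unfolding Dq_def wp[symmetric]
      using wv[OF StT(2)[OF TS]] wv[OF QinT(1)[OF TS]] by (simp add: inner_diff_right)
    have Dr: "Dr T = cw T \<bullet> (p - R T)" unfolding Dr_def wp[symmetric]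
      using wv[OF StT(2)[OF TS]] wv[OF QinT(2)[OF TS]] by (simp add: inner_diff_right)
    define m where "m = Min (cot ` tri_angles T)"
    have fa: "finite (cot ` tri_angles T)" using finite_tri_angles[OF finT[OF T]] by simp
    have ang1: "vangle (p - R T) (Q T - R T) \<in> tri_angles T"
      unfolding tri_angles_def mem_Collect_eq
      by (rule exI[of _ "R T"], rule exI[of _ p], rule exI[of _ "Q T"])
         (use QinT[OF TS] StT(2)[OF TS] QRT(2,3,4)[OF TS] in auto)
    have ang2: "vangle (p - Q T) (R T - Q T) \<in> tri_angles T"
      unfolding tri_angles_def mem_Collect_eq
      by (rule exI[of _ "Q T"], rule exI[of _ p], rule exI[of _ "R T"])
         (use QinT[OF TS] StT(2)[OF TS] QRT(2,3,4)[OF TS] in auto)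
    have m1: "m \<le> cot (vangle (p - R T) (Q T - R T))" unfolding m_def using fa ang1 by (auto intro: Min_le)
    have m2: "m \<le> cot (vangle (p - Q T) (R T - Q T))" unfolding m_def using fa ang2 by (auto intro: Min_le)
    have ar: "7 * B * measure lebesgue (convex hull T) < 3 * m" using area T unfolding m_def by auto
    have A: "measure lebesgue (convex hull T) \<ge> \<bar>det2 (Q T - p) (R T - p)\<bar> / 4"
      using tri_measure[where p=p and q="Q T" and r="R T", unfolded QRT(1)[OF TS]] .
    show ?thesis using key_geom[OF QRT(5)[OF TS] m1 m2 ar A B0 Dq Dr Dnn] unfolding K_def by auto
  qed
  define Nul where "Nul = (\<Union>T\<in>\<T>. frontier (convex hull T)) \<union> (\<Union>T\<in>\<T>. \<Union>T'\<in>\<T> - {T}. convex hull T \<inter> convex hull T')"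
  have negNul: "negligible Nul"
  proof -
    have "negligible (frontier (convex hull T))" if "T \<in> \<T>" for T
      by (rule negligible_convex_frontier) simp
    moreover have "negligible (convex hull T \<inter> convex hull T')" if TT: "T \<in> \<T>" "T' \<in> \<T>" "T' \<noteq> T" for T T'
    proof -
      have eq: "convex hull T \<inter> convex hull T' = convex hull (T \<inter> T')"
        using conf_facts(6)[OF conf TT(1,2)] TT(3) by auto
      have ind: "\<not> affine_dependent T"
      proof -
        obtain v where "v \<in> T" using card3[OF TT(1)] by (metis card.empty ex_in_conv zero_neq_numeral)
        then obtain q r where Tq: "T = {v, q, r}" "v \<noteq> q" "v \<noteq> r" "q \<noteq> r" using tri[OF TT(1)] by blast
        then show ?thesis using tri_indep[of v q r] ncol[OF TT(1)] by simp
      qed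
      have ind2: "\<not> affine_dependent (T \<inter> T')" using affine_dependent_subset[of "T \<inter> T'" T] ind by auto
      have "T \<inter> T' \<noteq> T"
      proof
        assume "T \<inter> T' = T"
        then have "T \<subseteq> T'" by auto
        then have "T = T'" using card_subset_eq[OF finT[OF TT(2)]] card3[OF TT(1)] card3[OF TT(2)] by auto
        then show False using TT(3) by simp
      qed
      then have "card (T \<inter> T') < card T" using finT[OF TT(1)] by (intro psubset_card_mono) auto
      then have "card (T \<inter> T') \<le> DIM(real^2)" using card3[OF TT(1)] by simp
      then have "interior (convex hull (T \<inter> T')) = {}"
        using interior_convex_hull_explicit_minimal[OF ind2] by simp
      then show ?thesis unfolding eq by (simp add: negligible_convex_interior)
    qed
    note neg1 = calculation and neg2 = this
    have n1: "negligible (\<Union>T\<in>\<T>. frontier (convex hull T))"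
      by (rule negligible_Union) (use fin neg1 in auto)
    have n2: "negligible (\<Union>T\<in>\<T>. \<Union>T'\<in>\<T> - {T}. convex hull T \<inter> convex hull T')"
    proof (rule negligible_Union)
      show "finite ((\<lambda>T. \<Union>T'\<in>\<T> - {T}. convex hull T \<inter> convex hull T') ` \<T>)" using fin by simp
    next
      fix S assume "S \<in> (\<lambda>T. \<Union>T'\<in>\<T> - {T}. convex hull T \<inter> convex hull T') ` \<T>"
      then obtain T where T: "T \<in> \<T>" "S = (\<Union>T'\<in>\<T> - {T}. convex hull T \<inter> convex hull T')" by auto
      show "negligible S" unfolding T(2)
        by (rule negligible_Union) (use fin neg2 T(1) in auto)
    qed
    show ?thesis unfolding Nul_def using n1 n2 by (rule negligible_Un)
  qed
  have Dnn: "Dq T \<ge> 0" "Dr T \<ge> 0" if TS: "T \<in> St" for T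
  proof -
    have QN: "Q T \<in> N" "R T \<in> N" using QinT[OF TS] StT(1)[OF TS] unfolding N_def by auto
    show "Dq T \<ge> 0" "Dr T \<ge> 0" using Mge[OF QN(1)] Mge[OF QN(2)] unfolding Dq_def Dr_def by auto
  qed
  define f1 where "f1 x = grad u1 x \<bullet> grad \<phi> x + b x (u1 x) * \<phi> x" for x
  define f2 where "f2 x = grad u2 x \<bullet> grad \<phi> x + b x (u2 x) * \<phi> x" for x
  have phipos: "\<forall>x\<in>\<Omega>. \<phi> x \<ge> 0" using phi_nonneg OsubU by auto
  have i1: "set_integrable lebesgue \<Omega> f1" and l1: "(LINT x:\<Omega>|lebesgue. f1 x) \<le> 0"
    using sub phiV phipos unfolding discrete_subsol_def f1_def by auto
  have i2: "set_integrable lebesgue \<Omega> f2" and l2: "(LINT x:\<Omega>|lebesgue. f2 x) \<ge> 0"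
    using sup phiV phipos unfolding discrete_supersol_def f2_def by auto
  define g where "g x = (\<Sum>T\<in>St. indicator (convex hull T) x * K T)" for x
  have finSt: "finite St" using fin unfolding St_def by simp
  have int_of: "x \<in> interior (convex hull T)" if H: "T \<in> \<T>" "x \<in> convex hull T" "x \<notin> Nul" for T x
  proof -
    have nf: "x \<notin> frontier (convex hull T)"
    proof
      assume "x \<in> frontier (convex hull T)"
      then have "x \<in> (\<Union>T\<in>\<T>. frontier (convex hull T))" using H(1) by (rule UN_I[rotated])
      then have "x \<in> Nul" unfolding Nul_def by (rule UnI1)
      then show False using H(3) by simp
    qed
    have "closed (convex hull T)"
      using finT[OF H(1)] by (simp add: compact_imp_closed finite_imp_compact_convex_hull)
    then have "frontier (convex hull T) = convex hull T - interior (convex hull T)"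
      by (simp add: frontier_def closure_closed)
    then show ?thesis using nf H(2) by simp
  qed
  have only: "T = T0" if H: "T \<in> \<T>" "T0 \<in> \<T>" "x \<in> convex hull T" "x \<in> convex hull T0" "x \<notin> Nul" for T T0 x
  proof (rule ccontr)
    assume ne: "T \<noteq> T0"
    have "x \<in> convex hull T \<inter> convex hull T0" using H(3,4) by simp
    then have "x \<in> (\<Union>T'\<in>\<T> - {T}. convex hull T \<inter> convex hull T')" using H(2) ne by (intro UN_I[of T0]) auto
    then have "x \<in> (\<Union>T\<in>\<T>. \<Union>T'\<in>\<T> - {T}. convex hull T \<inter> convex hull T')" using H(1) by (rule UN_I[rotated])
    then have "x \<in> Nul" unfolding Nul_def by (rule UnI2)
    then show False using H(5) by simp
  qed
  have pw: "g x \<le> f1 x - f2 x"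
    if x: "x \<in> \<Omega>" "x \<notin> Nul" and bC1: "(b x) C1_differentiable_on UNIV"
      and bd: "\<forall>\<eta>. 0 \<le> deriv (b x) \<eta> \<and> deriv (b x) \<eta> \<le> B" for x
  proof -
    obtain T0 where T0: "T0 \<in> \<T>" "x \<in> convex hull T0" using x(1) OsubU unfolding U_def by auto
    have xint: "x \<in> interior (convex hull T0)" using int_of[OF T0 x(2)] .
    have gx: "g x = (if T0 \<in> St then K T0 else 0)"
    proof -
      have "g x = (\<Sum>T\<in>St. if T = T0 then K T else 0)"
        unfolding g_def
      proof (rule sum.cong[OF refl])
        fix T assume "T \<in> St"
        then have T: "T \<in> \<T>" using StT(1) by simp
        show "indicator (convex hull T) x * K T = (if T = T0 then K T else 0)"
        proof (cases "T = T0")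
          case True then show ?thesis using T0(2) by simp
        next
          case False
          then have "x \<notin> convex hull T" using only[OF T T0(1) _ T0(2) x(2)] by blast
          then show ?thesis using False by simp
        qed
      qed
      also have "\<dots> = (if T0 \<in> St then K T0 else 0)" using finSt by (simp add: sum.delta')
      finally show ?thesis .
    qed
    have isub: "interior (convex hull T0) \<subseteq> convex hull T0" by (rule interior_subset)
    have gu1: "grad u1 x = c1 T0"
      by (rule grad_affine[OF open_interior xint, where d = "d1 T0"]) (use cd1 T0(1) isub in blast)
    have gu2: "grad u2 x = c2 T0"
      by (rule grad_affine[OF open_interior xint, where d = "d2 T0"]) (use cd2 T0(1) isub in blast)
    have fd: "f1 x - f2 x = cw T0 \<bullet> grad \<phi> x + (b x (u1 x) - b x (u2 x)) * \<phi> x"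
      unfolding f1_def f2_def cw_def gu1 gu2 by (simp add: inner_diff_left algebra_simps)
    have xU: "x \<in> U" using x(1) OsubU by auto
    have bb: "(b x (u1 x) - b x (u2 x)) * \<phi> x \<ge> B * min (w x) 0 * \<phi> x"
      using b_diff_mult[OF bC1 bd phi_nonneg[OF xU], of "u1 x" "u2 x"] unfolding w_def by simp
    show ?thesis
    proof (cases "p \<in> T0")
      case True
      then have TS: "T0 \<in> St" using T0(1) unfolding St_def by simp
      have gphi: "grad \<phi> x = lamc p (Q T0) (R T0)"
        by (rule grad_affine[OF open_interior xint, where d = "lamd p (Q T0) (R T0)"])
           (use phi_on[OF T0(1)] True isub in \<open>auto simp: lp_def lam_def\<close>)
      obtain a b' c where abc: "0 \<le> a" "0 \<le> b'" "0 \<le> c" "a + b' + c = 1" "x = a *\<^sub>R p + b' *\<^sub>R Q T0 + c *\<^sub>R R T0"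
        using hull3[OF TS T0(2)] by blast
      have phx: "\<phi> x = a" using phi_hull[OF TS abc(5) abc(4) T0(2)] .
      have wv: "w v = cw T0 \<bullet> v + dw T0" if "v \<in> T0" for v using cdw[OF T0(1) hull_inc[OF that]] .
      have "w x = a * w p + b' * w (Q T0) + c * w (R T0)"
        using cdw[OF T0] aff3[OF abc(4), of "cw T0" p "Q T0" "R T0" "dw T0"] abc(5)
          wv[OF StT(2)[OF TS]] wv[OF QinT(1)[OF TS]] wv[OF QinT(2)[OF TS]] by simp
      also have "\<dots> = (a + b' + c) * M - b' * Dq T0 - c * Dr T0"
      proof -
        have e1: "w (Q T0) = M - Dq T0" "w (R T0) = M - Dr T0" by (simp_all add: Dq_def Dr_def)
        show ?thesis unfolding e1 wp by (simp add: algebra_simps)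
      qed
      also have "\<dots> = M - b' * Dq T0 - c * Dr T0" using abc(4) by simp
      finally have wx: "w x = M - b' * Dq T0 - c * Dr T0" .
      have D0: "Dq T0 \<ge> 0" "Dr T0 \<ge> 0" using Dnn[OF TS] by auto
      have "b' * Dq T0 + c * Dr T0 \<le> (b' + c) * (Dq T0 + Dr T0)"
        using abc D0 by (simp add: algebra_simps)
      moreover have "b' + c = 1 - a" using abc(4) by simp
      ultimately have s1: "b' * Dq T0 + c * Dr T0 \<le> (1 - a) * (Dq T0 + Dr T0)" by simp
      have s0: "(1 - a) * (Dq T0 + Dr T0) \<ge> 0" using abc D0 by simp
      have mn: "min (w x) 0 \<ge> - ((1 - a) * (Dq T0 + Dr T0))" using wx s1 s0 Mpos by simp
      have "B * min (w x) 0 * \<phi> x \<ge> B * (- ((1 - a) * (Dq T0 + Dr T0))) * a"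
        unfolding phx using mn B0 abc(1) by (intro mult_right_mono mult_left_mono) auto
      moreover have "B * (- ((1 - a) * (Dq T0 + Dr T0))) * a \<ge> - (B * (Dq T0 + Dr T0)) / 4"
      proof -
        have h: "(B * (Dq T0 + Dr T0)) * (a * (1 - a)) \<le> (B * (Dq T0 + Dr T0)) * (1/4)"
          using tprod_le[of a] B0 D0 by (intro mult_left_mono) auto
        have "B * (- ((1 - a) * (Dq T0 + Dr T0))) * a = - ((B * (Dq T0 + Dr T0)) * (a * (1 - a)))"
          by (simp add: algebra_simps)
        then show ?thesis using h by linarith
      qed
      ultimately show ?thesis using fd bb gx TS gphi unfolding K_def by simp
    next
      case False
      have gphi: "grad \<phi> x = 0"
        by (rule grad_affine[OF open_interior xint, where d = 0]) (use phi_on[OF T0(1)] False isub in auto)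
      have "\<phi> x = 0" using phi_on[OF T0] False by simp
      moreover have "T0 \<notin> St" using False unfolding St_def by simp
      ultimately show ?thesis using fd gx gphi by simp
    qed
  qed
  have AE1: "AE x in lebesgue. x \<in> \<Omega> \<longrightarrow> (b x) C1_differentiable_on UNIV \<and>
        (\<forall>\<eta>. 0 \<le> deriv (b x) \<eta> \<and> deriv (b x) \<eta> \<le> B)"
    using car unfolding caratheodory_bounded_def by auto
  have AE2: "AE x in lebesgue. x \<notin> Nul"
    by (rule AE_not_in) (use negNul in \<open>simp add: negligible_iff_null_sets\<close>)
  have AE3: "AE x in lebesgue. g x \<le> indicator \<Omega> x *\<^sub>R f1 x - indicator \<Omega> x *\<^sub>R f2 x"
    using AE1 AE2
  proof eventually_elim
    case (elim x)
    show ?case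
    proof (cases "x \<in> \<Omega>")
      case True
      then show ?thesis using pw[of x] elim by simp
    next
      case False
      have "x \<notin> convex hull T" if "T \<in> St" for T
      proof
        assume "x \<in> convex hull T"
        then have "x \<in> interior (convex hull T)" using int_of StT(1)[OF that] elim by blast
        moreover have "interior (convex hull T) \<subseteq> \<Omega>"
          unfolding OU U_def using StT(1)[OF that] by (intro interior_mono) auto
        ultimately show False using False by auto
      qed
      then have "g x = 0" unfolding g_def by (simp add: indicator_def)
      then show ?thesis using False by simp
    qed
  qed
  have hm: "convex hull T \<in> lmeasurable" if "T \<in> \<T>" for T
    using finT[OF that] by (intro lmeasurable_compact finite_imp_compact_convex_hull)
  have ii: "integrable lebesgue (indicat_real (convex hull T))" if "T \<in> \<T>" for T
  proof -
    have A: "convex hull T \<in> sets lebesgue" "emeasure lebesgue (convex hull T) < \<infinity>"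
      using hm[OF that] unfolding fmeasurable_def by auto
    show ?thesis unfolding integrable_indicator_iff sets.Int_space_eq2[OF A(1)] using A by blast
  qed
  have iiS: "integrable lebesgue (\<lambda>x. indicator (convex hull T) x * K T)" if "T \<in> St" for T
    by (rule integrable_mult_left) (rule ii[OF StT(1)[OF that]])
  have gi: "integrable lebesgue g"
    unfolding g_def by (rule Bochner_Integration.integrable_sum) (rule iiS)
  have iK: "integral\<^sup>L lebesgue (\<lambda>x. indicator (convex hull T) x * K T) = K T * measure lebesgue (convex hull T)"
    if "T \<in> St" for T
  proof -
    have "integral\<^sup>L lebesgue (\<lambda>x. indicator (convex hull T) x * K T) = integral\<^sup>L lebesgue (indicat_real (convex hull T)) * K T"
      by (rule integral_mult_left_zero)
    also have "\<dots> = measure lebesgue (convex hull T) * K T" by simp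
    finally show ?thesis by simp
  qed
  have gint: "integral\<^sup>L lebesgue g = (\<Sum>T\<in>St. K T * measure lebesgue (convex hull T))"
  proof -
    have "integral\<^sup>L lebesgue g = (\<Sum>T\<in>St. integral\<^sup>L lebesgue (\<lambda>x. indicator (convex hull T) x * K T))"
      unfolding g_def by (rule Bochner_Integration.integral_sum) (rule iiS)
    also have "\<dots> = (\<Sum>T\<in>St. K T * measure lebesgue (convex hull T))"
      by (rule sum.cong[OF refl]) (rule iK)
    finally show ?thesis .
  qed
  have gpos: "integral\<^sup>L lebesgue g > 0"
  proof -
    have "Dq Ts + Dr Ts > 0" using Tsmall Dnn[OF TsS] unfolding Dq_def Dr_def by auto
    then have K1: "K Ts > 0" using Kfacts[OF TsS] by auto
    have "measure lebesgue (convex hull Ts) \<ge> \<bar>det2 (Q Ts - p) (R Ts - p)\<bar> / 4"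
      using tri_measure[where p=p and q="Q Ts" and r="R Ts", unfolded QRT(1)[OF TsS]] .
    moreover have "\<bar>det2 (Q Ts - p) (R Ts - p)\<bar> > 0" using QRT(5)[OF TsS] by simp
    ultimately have m1: "measure lebesgue (convex hull Ts) > 0" by linarith
    have "K Ts * measure lebesgue (convex hull Ts) \<le> (\<Sum>T\<in>St. K T * measure lebesgue (convex hull T))"
      by (rule member_le_sum[OF TsS _ finSt]) (use Kfacts in auto)
    moreover have "K Ts * measure lebesgue (convex hull Ts) > 0" using K1 m1 by simp
    ultimately show ?thesis using gint by simp
  qed
  have F1: "integrable lebesgue (\<lambda>x. indicator \<Omega> x *\<^sub>R f1 x)" using i1 unfolding set_integrable_def .
  have F2: "integrable lebesgue (\<lambda>x. indicator \<Omega> x *\<^sub>R f2 x)" using i2 unfolding set_integrable_def .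
  have "integral\<^sup>L lebesgue g \<le> integral\<^sup>L lebesgue (\<lambda>x. indicator \<Omega> x *\<^sub>R f1 x - indicator \<Omega> x *\<^sub>R f2 x)"
    by (rule integral_mono_AE[OF gi Bochner_Integration.integrable_diff[OF F1 F2] AE3])
  also have "\<dots> = (LINT x:\<Omega>|lebesgue. f1 x) - (LINT x:\<Omega>|lebesgue. f2 x)"
    unfolding set_lebesgue_integral_def by (rule Bochner_Integration.integral_diff[OF F1 F2])
  also have "\<dots> \<le> 0" using l1 l2 by linarith
  finally show False using gpos by simp
qed

theorem theorem5p1:
  shows "(\<forall>(b :: real \<Rightarrow> real \<Rightarrow> real) B \<alpha> \<beta> n a u1 u2.
            mesh1D \<alpha> \<beta> n a \<and>
            caratheodory_bounded {\<alpha><..<\<beta>} b B \<and>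
            discrete_subsol {\<alpha><..<\<beta>} (P1_1D n a) (\<lambda>u v x. deriv u x * deriv v x) b u1 \<and>
            discrete_supersol {\<alpha><..<\<beta>} (P1_1D n a) (\<lambda>u v x. deriv u x * deriv v x) b u2 \<and>
            (\<forall>k\<in>{1..n}. B * (a k - a (k - 1))^2 < 2)
          \<longrightarrow> (\<forall>x\<in>{\<alpha><..<\<beta>}. u1 x \<le> u2 x))
       \<and> (\<forall>(b :: real^2 \<Rightarrow> real \<Rightarrow> real) B \<Omega> \<T> u1 u2.
            conforming_triangulation \<Omega> \<T> \<and>
            (\<exists>tmin tmax. 0 < tmin \<and> tmin \<le> tmax \<and> tmax < pi / 2 \<and>
               (\<forall>T\<in>\<T>. \<forall>\<theta>\<in>tri_angles T. tmin \<le> \<theta> \<and> \<theta> \<le> tmax)) \<and>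
            caratheodory_bounded \<Omega> b B \<and>
            discrete_subsol \<Omega> (P1_2D \<Omega> \<T>) (\<lambda>u v x. grad u x \<bullet> grad v x) b u1 \<and>
            discrete_supersol \<Omega> (P1_2D \<Omega> \<T>) (\<lambda>u v x. grad u x \<bullet> grad v x) b u2 \<and>
            (\<forall>T\<in>\<T>. 7 * B * measure lebesgue (convex hull T) < 3 * Min (cot ` tri_angles T))
          \<longrightarrow> (\<forall>x\<in>\<Omega>. u1 x \<le> u2 x))"
  proof (intro conjI)
  show "\<forall>(b :: real \<Rightarrow> real \<Rightarrow> real) B \<alpha> \<beta> n a u1 u2.
            mesh1D \<alpha> \<beta> n a \<and>
            caratheodory_bounded {\<alpha><..<\<beta>} b B \<and>
            discrete_subsol {\<alpha><..<\<beta>} (P1_1D n a) (\<lambda>u v x. deriv u x * deriv v x) b u1 \<and>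
            discrete_supersol {\<alpha><..<\<beta>} (P1_1D n a) (\<lambda>u v x. deriv u x * deriv v x) b u2 \<and>
            (\<forall>k\<in>{1..n}. B * (a k - a (k - 1))^2 < 2)
          \<longrightarrow> (\<forall>x\<in>{\<alpha><..<\<beta>}. u1 x \<le> u2 x)"
    using thm1D by blast
  show "\<forall>(b :: real^2 \<Rightarrow> real \<Rightarrow> real) B \<Omega> \<T> u1 u2.
            conforming_triangulation \<Omega> \<T> \<and>
            (\<exists>tmin tmax. 0 < tmin \<and> tmin \<le> tmax \<and> tmax < pi / 2 \<and>
               (\<forall>T\<in>\<T>. \<forall>\<theta>\<in>tri_angles T. tmin \<le> \<theta> \<and> \<theta> \<le> tmax)) \<and>
            caratheodory_bounded \<Omega> b B \<and>
            discrete_subsol \<Omega> (P1_2D \<Omega> \<T>) (\<lambda>u v x. grad u x \<bullet> grad v x) b u1 \<and>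
            discrete_supersol \<Omega> (P1_2D \<Omega> \<T>) (\<lambda>u v x. grad u x \<bullet> grad v x) b u2 \<and>
            (\<forall>T\<in>\<T>. 7 * B * measure lebesgue (convex hull T) < 3 * Min (cot ` tri_angles T))
          \<longrightarrow> (\<forall>x\<in>\<Omega>. u1 x \<le> u2 x)"
    using thm2D by blast
qed

end
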